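(* Let $\Omega\subset\mathbb R^{n+1}$ be a bounded $C^2$ domain, $S=\partial\Omega$, $\beta\in C^1(S,(0,\pi))$, and $p\ge1$. There is a constant $C=C(n,p,\beta,\operatorname{diam}(\Omega),|h_S|_{C^0(S)})<\infty$ such that the following holds. Let $V$ be an oriented integral $n$-varifold on $\overline\Omega$ with $\|V\|$ $n$-rectifiable of class $C^2$, and $\Gamma$ a Radon measure on $G^o_{n,\beta}(S)$ with $x\notin\operatorname{spt}\|\Gamma\|$ for $\|V\|$-a.e. $x$. If $V$ has curvature in $L^p$, with coefficients $W_{ia}$, and prescribed contact angle $\beta$ with $S$ along $\Gamma$, then $$\|V\|(\overline\Omega)\le C\big(\|\Gamma\|(S)+\|W\|^p_{L^p(V)}\big),\qquad \|\Gamma\|(S)\le C\big(\|V\|(\overline\Omega)+\|W\|^p_{L^p(V)}\big),$$ where $\|W\|^p_{L^p(V)}=\int|W|^p\,dV$ and $|W|$ is the Frobenius norm of the matrix $(W_{ia})$.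
   Context: Notation and conventions. $n\ge1$. $\nu^S$ is the unit normal to $S$ pointing into $\Omega$, $h_S$ is the second fundamental form of $S$. $\mathcal H^k$ is $k$-dimensional Hausdorff measure; repeated indices are summed over $\{1,\dots,n+1\}$; $\pi(x,y)=x$ is projection onto the first factor; $f_\#\mu(E)=\mu(f^{-1}(E))$ is push-forward. Grassmannians. The oriented Grassmannian bundle over $A\subset\mathbb R^{n+1}$ is $G^o_n(A)=A\times\mathbf S^n\subset A\times\mathbb R^{n+1}$, where $v\in\mathbf S^n$ represents the oriented hyperplane $v^\perp$ with unit normal $v$. For $v\in\mathbf S^n$, $v^\perp(u):=u-\langle u,v\rangle v$. Capillary bundles. For $x\in S$, $G^o_{n,\beta}(x):=\{v\in\mathbf S^n:|\langle v,\nu^S(x)\rangle|=|\cos\beta(x)|\}$ and $G^o_{n,\beta}(S):=\{(x,v):x\in S,\ v\in G^o_{n,\beta}(x)\}$; for such $(x,v)$, $\mathbf n^o(x,v):=v^\perp(\nu^S(x))/|v^\perp(\nu^S(x))|$. For a Radon measure $\Gamma$ on $G^o_{n,\beta}(S)$, $\|\Gamma\|=\pi_\#\Gamma$. Oriented varifolds. An oriented $n$-varifold is a Radon measure $V$ on $\mathbb R^{n+1}\times\mathbf S^n$; its weight is $\|V\|=\pi_\#V$, and it is on $A$ if $\|V\|$ is supported in $A$. It is an oriented integral $n$-varifold, written $V=\mathbf v(R,\xi,\theta_1,\theta_2)$, if there are an $n$-rectifiable set $R$, a measurable unit normal $\xi$ to the approximate tangent planes $T_xR$, and locally integrable $\mathbb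 N$-valued $\theta_1,\theta_2$ with $(\theta_1,\theta_2)\ne(0,0)$ $\mathcal H^n$-a.e. on $R$, such that $V(\phi)=\int_R(\theta_1\phi(x,\xi(x))+\theta_2\phi(x,-\xi(x)))\,d\mathcal H^n$; then $\|V\|=(\theta_1+\theta_2)\mathcal H^n\llcorner R$. A Radon measure $\mu$ is $n$-rectifiable of class $C^2$ if $\mu=\tau\mathcal H^n\llcorner M$ with $\tau>0$ locally integrable and $M$ covered, up to an $\mathcal H^n$-null set, by countably many embedded $n$-dimensional $C^2$ submanifolds. Definition (curvature with capillary boundary). Let $V$ be an oriented integral $n$-varifold on $\overline\Omega$ and $\Gamma$ a Radon measure on $G^o_{n,\beta}(S)$. $V$ has curvature and prescribed contact angle $\beta$ with $S$ along $\Gamma$ if there are $V$-measurable real functions $W_{ia}$, $i,a\in\{1,\dots,n+1\}$, defined $V$-a.e., with $$\int\big((\delta_{ij}-v_iv_j)D_j\phi+W_{ia}D^*_a\phi-(W_{rr}v_i+W_{ri}v_r)\phi\big)\,dV=-\int\phi\,\mathbf n^o_i\,d\Gamma$$ for all $\phi\in C^1_c(\mathbb R^{n+1}\times\mathbb R^{n+1})$ and all $i$, where $D_j$ is the partial derivative in $x_j$ (first factor) and $D^*_a$ in $v_a$ (second factor). It has curvature in $L^p$ if all $W_{ia}\in L^p(V)$. *)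

theory Defs
  imports "HOL-Analysis.Analysis"
begin

definition C1_on :: "'a::euclidean_space set \<Rightarrow> ('a \<Rightarrow> 'b::real_normed_vector) \<Rightarrow> bool" where
  "C1_on U f \<longleftrightarrow> (\<forall>x\<in>U. f differentiable (at x)) \<and>
     (\<forall>h. continuous_on U (\<lambda>x. frechet_derivative f (at x) h))"

definition C2_on :: "'a::euclidean_space set \<Rightarrow> ('a \<Rightarrow> 'b::real_normed_vector) \<Rightarrow> bool" where
  "C2_on U f \<longleftrightarrow> C1_on U f \<and> (\<forall>h. C1_on U (\<lambda>x. frechet_derivative f (at x) h))"

definition C1c :: "('a::euclidean_space \<times> 'a \<Rightarrow> real) \<Rightarrow> bool" where
  "C1c \<phi> \<longleftrightarrow> C1_on UNIV \<phi> \<and> compact (closure {z. \<phi> z \<noteq> 0})"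

definition local_defining_fn :: "'a::euclidean_space set \<Rightarrow> 'a \<Rightarrow> real \<Rightarrow> ('a \<Rightarrow> real) \<Rightarrow> bool" where
  "local_defining_fn \<Omega> x r \<rho> \<longleftrightarrow> r > 0 \<and> C2_on (ball x r) \<rho> \<and>
     (\<forall>z\<in>ball x r. frechet_derivative \<rho> (at z) \<noteq> (\<lambda>_. 0)) \<and>
     \<Omega> \<inter> ball x r = {z \<in> ball x r. \<rho> z < 0}"

definition C2_domain :: "'a::euclidean_space set \<Rightarrow> bool" where
  "C2_domain \<Omega> \<longleftrightarrow> open \<Omega> \<and> connected \<Omega> \<and> \<Omega> \<noteq> {} \<and>
     (\<forall>x\<in>frontier \<Omega>. \<exists>r \<rho>. local_defining_fn \<Omega> x r \<rho>)"

text \<open>Unit normal to S = frontier Omega pointing into Omega: -grad rho/|grad rho|.\<close>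
definition inward_normal :: "'a::euclidean_space set \<Rightarrow> 'a \<Rightarrow> 'a" where
  "inward_normal \<Omega> x = (SOME v. norm v = 1 \<and> (\<exists>r \<rho>. local_defining_fn \<Omega> x r \<rho> \<and>
      (\<exists>c>0. \<forall>h. frechet_derivative \<rho> (at x) h = - c * (v \<bullet> h))))"

definition C1_on_surface :: "'a::euclidean_space set \<Rightarrow> ('a \<Rightarrow> real) \<Rightarrow> bool" where
  "C1_on_surface S \<beta> \<longleftrightarrow> (\<exists>U b. open U \<and> S \<subseteq> U \<and> C1_on U b \<and> (\<forall>x\<in>S. b x = \<beta> x))"

definition C2_hypersurface :: "'a::euclidean_space set \<Rightarrow> bool" where
  "C2_hypersurface N \<longleftrightarrow> (\<forall>y\<in>N. \<exists>U g. open U \<and> y \<in> U \<and> C2_on U (g :: 'a \<Rightarrow> real) \<and>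
      (\<forall>z\<in>U. frechet_derivative g (at z) \<noteq> (\<lambda>_. 0)) \<and> N \<inter> U = {z\<in>U. g z = 0})"

definition radon :: "('b::euclidean_space) measure \<Rightarrow> bool" where
  "radon M \<longleftrightarrow> sets M = sets borel \<and> (\<forall>K. compact K \<longrightarrow> emeasure M K < \<infinity>)"

definition msupport :: "'b::euclidean_space measure \<Rightarrow> 'b set" where
  "msupport M = {x. \<forall>r>0. emeasure M (ball x r) > 0}"

definition weight :: "('a::euclidean_space \<times> 'a) measure \<Rightarrow> 'a measure" where
  "weight V = distr V borel fst"

definition hausdorff_pre :: "nat \<Rightarrow> real \<Rightarrow> 'a::euclidean_space set \<Rightarrow> ennreal" where
  "hausdorff_pre m \<delta> A = (INF C \<in> {C :: nat \<Rightarrow> 'a set. A \<subseteq> (\<Union>i. C i) \<and>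
        (\<forall>i. bounded (C i) \<and> diameter (C i) \<le> \<delta>)}.
      (\<Sum>i. ennreal (unit_ball_vol (real m) * (diameter (C i) / 2) ^ m)))"

definition hausdorff_outer :: "nat \<Rightarrow> 'a::euclidean_space set \<Rightarrow> ennreal" where
  "hausdorff_outer m A = (SUP \<delta> \<in> {0<..}. hausdorff_pre m \<delta> A)"

text \<open>H^m as a measure on the Borel sets (on which it is countably additive), and its completion.\<close>
definition hausdorff :: "nat \<Rightarrow> 'a::euclidean_space measure" where
  "hausdorff m = completion (measure_of UNIV (sets borel) (hausdorff_outer m))"

definition countably_rectifiable :: "nat \<Rightarrow> 'a::euclidean_space set \<Rightarrow> bool" where
  "countably_rectifiable m R \<longleftrightarrow> (\<exists>R0 (L :: 'a set) (F :: nat \<Rightarrow> 'a \<Rightarrow> 'a). hausdorff_outer m R0 = 0 \<and> subspace L \<and> dim L = m \<and>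
      (\<forall>j. \<exists>B. lipschitz_on B L (F j)) \<and> R \<subseteq> R0 \<union> (\<Union>j. F j ` L))"

text \<open>P is the approximate tangent plane of R at x with respect to the multiplicity theta
  (Simon, GMT 11.4).\<close>
definition approx_tangent :: "nat \<Rightarrow> 'a::euclidean_space set \<Rightarrow> ('a \<Rightarrow> real) \<Rightarrow> 'a \<Rightarrow> 'a set \<Rightarrow> bool" where
  "approx_tangent m R \<theta> x P \<longleftrightarrow> subspace P \<and> dim P = m \<and>
     (\<forall>f :: 'a \<Rightarrow> real. continuous_on UNIV f \<and> compact (closure {y. f y \<noteq> 0}) \<longrightarrow>
        ((\<lambda>t. t powr (- real m) *
            (\<integral>y. indicator R y * \<theta> y * f ((1 / t) *\<^sub>R (y - x)) \<partial>hausdorff m))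
          \<longlongrightarrow> \<theta> x * (\<integral>y. indicator P y * f y \<partial>hausdorff m)) (at_right 0))"

definition oriented_integral_varifold :: "nat \<Rightarrow> ('a::euclidean_space \<times> 'a) measure \<Rightarrow> bool" where
  "oriented_integral_varifold m V \<longleftrightarrow> radon V \<and> emeasure V (- (UNIV \<times> sphere 0 1)) = 0 \<and>
    (\<exists>R \<xi> (\<theta>1 :: 'a \<Rightarrow> nat) \<theta>2.
       countably_rectifiable m R \<and>
       \<xi> \<in> borel_measurable (hausdorff m) \<and>
       \<theta>1 \<in> measurable (hausdorff m) (count_space UNIV) \<and>
       \<theta>2 \<in> measurable (hausdorff m) (count_space UNIV) \<and>
       (\<forall>K. compact K \<longrightarrow> (\<integral>\<^sup>+x. indicator (R \<inter> K) x * ennreal (real (\<theta>1 x + \<theta>2 x)) \<partial>hausdorff m) < \<infinity>) \<and>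
       (AE x in hausdorff m. x \<in> R \<longrightarrow> (\<theta>1 x, \<theta>2 x) \<noteq> (0, 0)) \<and>
       (AE x in hausdorff m. x \<in> R \<longrightarrow> norm (\<xi> x) = 1 \<and>
          (\<exists>P. approx_tangent m R (\<lambda>y. real (\<theta>1 y + \<theta>2 y)) x P \<and> (\<forall>u\<in>P. \<xi> x \<bullet> u = 0))) \<and>
       (\<forall>E \<in> sets borel. emeasure V E =
          (\<integral>\<^sup>+x. indicator R x * (ennreal (real (\<theta>1 x)) * indicator E (x, \<xi> x)
                 + ennreal (real (\<theta>2 x)) * indicator E (x, - \<xi> x)) \<partial>hausdorff m)))"

definition C2_rectifiable_measure :: "nat \<Rightarrow> 'a::euclidean_space measure \<Rightarrow> bool" where
  "C2_rectifiable_measure m \<mu> \<longleftrightarrow> (\<exists>(\<tau> :: 'a \<Rightarrow> real) (M :: 'a set) (N :: nat \<Rightarrow> 'a set).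
     \<tau> \<in> borel_measurable (hausdorff m) \<and> (\<forall>x\<in>M. \<tau> x > 0) \<and>
     (\<forall>K. compact K \<longrightarrow> (\<integral>\<^sup>+x. indicator (M \<inter> K) x * ennreal (\<tau> x) \<partial>hausdorff m) < \<infinity>) \<and>
     (\<forall>k. C2_hypersurface (N k)) \<and> hausdorff_outer m (M - (\<Union>k. N k)) = 0 \<and>
     (\<forall>E \<in> sets borel. emeasure \<mu> E = (\<integral>\<^sup>+x. indicator M x * ennreal (\<tau> x) * indicator E x \<partial>hausdorff m)))"

definition capillary_fibre :: "'a::euclidean_space set \<Rightarrow> ('a \<Rightarrow> real) \<Rightarrow> 'a \<Rightarrow> 'a set" where
  "capillary_fibre \<Omega> \<beta> x = {v \<in> sphere 0 1. \<bar>v \<bullet> inward_normal \<Omega> x\<bar> = \<bar>cos (\<beta> x)\<bar>}"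

definition capillary_bundle :: "'a::euclidean_space set \<Rightarrow> ('a \<Rightarrow> real) \<Rightarrow> ('a \<times> 'a) set" where
  "capillary_bundle \<Omega> \<beta> = {(x, v). x \<in> frontier \<Omega> \<and> v \<in> capillary_fibre \<Omega> \<beta> x}"

definition vperp :: "'a::euclidean_space \<Rightarrow> 'a \<Rightarrow> 'a" where
  "vperp v u = u - (u \<bullet> v) *\<^sub>R v"

text \<open>The conormal n^o(x,v); set to 0 off the capillary bundle (where it is not used).\<close>
definition conormal :: "'a::euclidean_space set \<Rightarrow> ('a \<Rightarrow> real) \<Rightarrow> 'a \<times> 'a \<Rightarrow> 'a" where
  "conormal \<Omega> \<beta> z = (if z \<in> capillary_bundle \<Omega> \<beta> then
      (let (x, v) = z in (1 / norm (vperp v (inward_normal \<Omega> x))) *\<^sub>R vperp v (inward_normal \<Omega> x))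
    else 0)"

definition Dx :: "('a::euclidean_space \<times> 'a \<Rightarrow> real) \<Rightarrow> 'a \<Rightarrow> 'a \<times> 'a \<Rightarrow> real" where
  "Dx \<phi> j z = frechet_derivative \<phi> (at z) (j, 0)"

definition Dv :: "('a::euclidean_space \<times> 'a \<Rightarrow> real) \<Rightarrow> 'a \<Rightarrow> 'a \<times> 'a \<Rightarrow> real" where
  "Dv \<phi> a z = frechet_derivative \<phi> (at z) (0, a)"

definition curv_integrand ::
    "('a::euclidean_space \<times> 'a \<Rightarrow> 'a \<Rightarrow> 'a \<Rightarrow> real) \<Rightarrow> ('a \<times> 'a \<Rightarrow> real) \<Rightarrow> 'a \<Rightarrow> 'a \<times> 'a \<Rightarrow> real" where
  "curv_integrand W \<phi> i z = (let v = snd z in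
      (\<Sum>j\<in>Basis. ((if i = j then 1 else 0) - (v \<bullet> i) * (v \<bullet> j)) * Dx \<phi> j z)
    + (\<Sum>a\<in>Basis. W z i a * Dv \<phi> a z)
    - (\<Sum>r\<in>Basis. W z r r * (v \<bullet> i) + W z r i * (v \<bullet> r)) * \<phi> z)"

text \<open>Integrals are with respect to the completion of V
  (V-measurable functions); the integrand is required to be V-integrable so that the
  left-hand side is meaningful.\<close>
definition has_capillary_curvature ::
    "'a::euclidean_space set \<Rightarrow> ('a \<Rightarrow> real) \<Rightarrow> ('a \<times> 'a) measure \<Rightarrow> ('a \<times> 'a) measure
      \<Rightarrow> ('a \<times> 'a \<Rightarrow> 'a \<Rightarrow> 'a \<Rightarrow> real) \<Rightarrow> bool" where
  "has_capillary_curvature \<Omega> \<beta> V \<Gamma> W \<longleftrightarrow>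
     (\<forall>i\<in>Basis. \<forall>a\<in>Basis. (\<lambda>z. W z i a) \<in> borel_measurable (completion V)) \<and>
     (\<forall>\<phi>. C1c \<phi> \<longrightarrow> (\<forall>i\<in>Basis.
        integrable (completion V) (curv_integrand W \<phi> i) \<and>
        (\<integral>z. curv_integrand W \<phi> i z \<partial>completion V) = - (\<integral>z. \<phi> z * (conormal \<Omega> \<beta> z \<bullet> i) \<partial>\<Gamma>)))"

definition curvature_in_Lp :: "real \<Rightarrow> ('a::euclidean_space \<times> 'a) measure \<Rightarrow> ('a \<times> 'a \<Rightarrow> 'a \<Rightarrow> 'a \<Rightarrow> real) \<Rightarrow> bool" where
  "curvature_in_Lp p V W \<longleftrightarrow> (\<forall>i\<in>Basis. \<forall>a\<in>Basis.
      (\<lambda>z. W z i a) \<in> borel_measurable (completion V) \<and>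
      integrable (completion V) (\<lambda>z. \<bar>W z i a\<bar> powr p))"

definition frob :: "('a::euclidean_space \<times> 'a \<Rightarrow> 'a \<Rightarrow> 'a \<Rightarrow> real) \<Rightarrow> 'a \<times> 'a \<Rightarrow> real" where
  "frob W z = sqrt (\<Sum>i\<in>Basis. \<Sum>a\<in>Basis. (W z i a)\<^sup>2)"

definition Lp_norm_pow :: "real \<Rightarrow> ('a::euclidean_space \<times> 'a) measure \<Rightarrow> ('a \<times> 'a \<Rightarrow> 'a \<Rightarrow> 'a \<Rightarrow> real) \<Rightarrow> real" where
  "Lp_norm_pow p V W = (\<integral>z. frob W z powr p \<partial>completion V)"

end

theory Submission
  imports Defs
begin


lemma C1_onD_diff: "C1_on U f \<Longrightarrow> x \<in> U \<Longrightarrow> (f has_derivative frechet_derivative f (at x)) (at x)"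
  unfolding C1_on_def using frechet_derivative_works by blast

lemma C1_on_UNIV_cont: "C1_on UNIV f \<Longrightarrow> continuous_on UNIV f"
  unfolding C1_on_def
  by (meson continuous_at_imp_continuous_on differentiable_imp_continuous_within UNIV_I)

lemma C1_on_mult:
  fixes f g :: "'a::euclidean_space \<Rightarrow> real"
  assumes f: "C1_on UNIV f" and g: "C1_on UNIV g"
  shows "C1_on UNIV (\<lambda>x. f x * g x)"
proof -
  have d: "((\<lambda>x. f x * g x) has_derivative
      (\<lambda>h. f x * frechet_derivative g (at x) h + frechet_derivative f (at x) h * g x)) (at x)" for x
    by (rule has_derivative_mult[OF C1_onD_diff[OF f] C1_onD_diff[OF g]]) auto
  have fd: "frechet_derivative (\<lambda>x. f x * g x) (at x) =
      (\<lambda>h. f x * frechet_derivative g (at x) h + frechet_derivative f (at x) h * g x)" for x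
    using d[of x] frechet_derivative_at by metis
  show ?thesis
    unfolding C1_on_def
  proof (intro conjI ballI allI)
    show "(\<lambda>x. f x * g x) differentiable at x" for x using d[of x] by (auto simp: differentiable_def)
    show "continuous_on UNIV (\<lambda>x. frechet_derivative (\<lambda>x. f x * g x) (at x) h)" for h
      unfolding fd using f g C1_on_UNIV_cont[OF f] C1_on_UNIV_cont[OF g]
      unfolding C1_on_def by (intro continuous_intros) auto
  qed
qed

lemma C1_on_add:
  fixes f g :: "'a::euclidean_space \<Rightarrow> real"
  assumes f: "C1_on UNIV f" and g: "C1_on UNIV g"
  shows "C1_on UNIV (\<lambda>x. f x + g x)"
proof -
  have d: "((\<lambda>x. f x + g x) has_derivative
      (\<lambda>h. frechet_derivative f (at x) h + frechet_derivative g (at x) h)) (at x)" for x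
    by (rule has_derivative_add[OF C1_onD_diff[OF f] C1_onD_diff[OF g]]) auto
  have fd: "frechet_derivative (\<lambda>x. f x + g x) (at x) =
      (\<lambda>h. frechet_derivative f (at x) h + frechet_derivative g (at x) h)" for x
    using d[of x] frechet_derivative_at by metis
  show ?thesis
    unfolding C1_on_def
  proof (intro conjI ballI allI)
    show "(\<lambda>x. f x + g x) differentiable at x" for x using d[of x] by (auto simp: differentiable_def)
    show "continuous_on UNIV (\<lambda>x. frechet_derivative (\<lambda>x. f x + g x) (at x) h)" for h
      unfolding fd using f g 
      unfolding C1_on_def by (intro continuous_intros) auto
  qed
qed

lemma C1_on_linear:
  fixes f :: "'a::euclidean_space \<Rightarrow> real"
  assumes "bounded_linear f" shows "C1_on UNIV f"
proof -
  have d: "(f has_derivative f) (at x)" for x using assms by (rule bounded_linear_imp_has_derivative)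
  have fd: "frechet_derivative f (at x) = f" for x using d[of x] frechet_derivative_at by metis
  show ?thesis unfolding C1_on_def fd using d by (auto simp: differentiable_def)
qed

lemma C1_on_const: "C1_on UNIV (\<lambda>x::'a::euclidean_space. c::real)"
  unfolding C1_on_def by auto

lemma C1_on_poly:
  fixes f :: "'a::euclidean_space \<Rightarrow> real"
  assumes "real_polynomial_function f" shows "C1_on UNIV f"
  using assms
  by (induction rule: real_polynomial_function.induct)
     (auto intro: C1_on_linear C1_on_const C1_on_add C1_on_mult)

definition qf :: "real \<Rightarrow> real" where "qf s = (max 0 s)^2"

lemma qf_deriv: "(qf has_real_derivative (2 * max 0 s)) (at s)"
proof (cases "s = 0")
  case True
  have "((\<lambda>h. (qf (0 + h) - qf 0) / h) \<longlongrightarrow> 0) (at 0)"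
  proof (rule tendsto_sandwich[of "\<lambda>h. - \<bar>h\<bar>" _ _ "\<lambda>h. \<bar>h\<bar>"])
    show "\<forall>\<^sub>F n in at 0. - \<bar>n\<bar> \<le> (qf (0 + n) - qf 0) / n"
      by (auto simp: qf_def power2_eq_square max_def divide_simps)
    show "\<forall>\<^sub>F n in at 0. (qf (0 + n) - qf 0) / n \<le> \<bar>n\<bar>"
      by (auto simp: qf_def power2_eq_square max_def divide_simps)
    show "((\<lambda>h. - \<bar>h\<bar>) \<longlongrightarrow> 0) (at (0::real))"
      using tendsto_minus[OF tendsto_rabs[OF tendsto_ident_at[of "0::real" UNIV]]] by simp
    show "((\<lambda>h. \<bar>h\<bar>) \<longlongrightarrow> 0) (at (0::real))"
      using tendsto_rabs[OF tendsto_ident_at[of "0::real" UNIV]] by simp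
  qed
  then show ?thesis using True by (simp add: DERIV_def)
next
  case False
  show ?thesis
  proof (cases "s > 0")
    case True
    have "((\<lambda>x. x^2) has_real_derivative (2 * max 0 s)) (at s)"
      using True by (auto intro!: derivative_eq_intros)
    then show ?thesis
      apply (rule has_field_derivative_transform_within_open[where S="{0<..}"])
      using True by (auto simp: qf_def)
  next
    case False
    then have s: "s < 0" using \<open>s \<noteq> 0\<close> by auto
    have "((\<lambda>x. 0) has_real_derivative (2 * max 0 s)) (at s)" using s by auto
    then show ?thesis
      apply (rule has_field_derivative_transform_within_open[where S="{..<0}"])
      using s by (auto simp: qf_def)
  qed
qed


definition Gf :: "real \<Rightarrow> real \<Rightarrow> real \<Rightarrow> real" where
  "Gf a b t = qf (b - t) / (qf (b - t) + qf (t - a))"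
definition Gd :: "real \<Rightarrow> real \<Rightarrow> real \<Rightarrow> real" where
  "Gd a b t = ((- (2 * max 0 (b - t))) * (qf (b - t) + qf (t - a))
     - qf (b - t) * (- (2 * max 0 (b - t)) + 2 * max 0 (t - a))) / (qf (b - t) + qf (t - a))^2"

lemma Gf_den_pos: "a < b \<Longrightarrow> qf (b - t) + qf (t - a) > 0"
  by (cases "t < b") (auto simp: qf_def intro: add_pos_nonneg add_nonneg_pos)

lemma Gf_deriv: assumes "a < b" shows "(Gf a b has_real_derivative Gd a b t) (at t)"
proof -
  have q1: "((\<lambda>t. qf (b - t)) has_real_derivative (2 * max 0 (b - t)) * (- 1)) (at t)"
    by (rule DERIV_chain2[OF qf_deriv]) (auto intro!: derivative_eq_intros)
  have q2: "((\<lambda>t. qf (t - a)) has_real_derivative (2 * max 0 (t - a)) * 1) (at t)"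
    by (rule DERIV_chain2[OF qf_deriv]) (auto intro!: derivative_eq_intros)
  have "((\<lambda>t. qf (b - t) / (qf (b - t) + qf (t - a))) has_real_derivative
     ((2 * max 0 (b - t)) * (- 1) * (qf (b - t) + qf (t - a)) - qf (b - t) * ((2 * max 0 (b - t)) * (- 1) + (2 * max 0 (t - a)) * 1))
       / (qf (b - t) + qf (t - a))^2) (at t)"
    using DERIV_divide[OF q1 DERIV_add[OF q1 q2]] Gf_den_pos[OF assms, of t]
    by (simp add: power2_eq_square)
  then show ?thesis unfolding Gf_def[abs_def] Gd_def by simp
qed

lemma qf_cont: "continuous_on UNIV qf"
  unfolding qf_def by (intro continuous_intros)

lemma Gd_cont: assumes "a < b" shows "continuous_on UNIV (Gd a b)"
  unfolding Gd_def qf_def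
  by (intro continuous_intros) (metis Gf_den_pos[OF assms] qf_def less_irrefl power_not_zero)

lemma Gf_one: "a < b \<Longrightarrow> t \<le> a \<Longrightarrow> Gf a b t = 1"
  using Gf_den_pos[of a b t] by (auto simp: Gf_def qf_def)

lemma Gf_zero: "a < b \<Longrightarrow> t \<ge> b \<Longrightarrow> Gf a b t = 0"
  by (auto simp: Gf_def qf_def)

lemma C1_cutoff:
  assumes "a < b"
  shows "C1_on UNIV (\<lambda>z::'b::euclidean_space. Gf a b (z \<bullet> z))"
proof -
  have d: "((\<lambda>z::'b. Gf a b (z \<bullet> z)) has_derivative (\<lambda>k. Gd a b (z \<bullet> z) * (z \<bullet> k + k \<bullet> z))) (at z)" for z
    using has_derivative_compose[where s=UNIV and x=z, OF has_derivative_inner[OF has_derivative_ident has_derivative_ident]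
        has_field_derivative_imp_has_derivative[OF Gf_deriv[OF assms]]]
    by (simp add: mult.commute)
  have fd: "frechet_derivative (\<lambda>z::'b. Gf a b (z \<bullet> z)) (at z) = (\<lambda>k. Gd a b (z \<bullet> z) * (z \<bullet> k + k \<bullet> z))" for z
    using d[of z] frechet_derivative_at by metis
  have c: "continuous_on UNIV (\<lambda>z::'b. Gd a b (z \<bullet> z))"
  proof -
    have "continuous_on UNIV (\<lambda>z::'b. z \<bullet> z)" by (intro continuous_intros)
    moreover have "continuous_on (range (\<lambda>z::'b. z \<bullet> z)) (Gd a b)"
      using Gd_cont[OF assms] continuous_on_subset by blast
    ultimately show ?thesis using continuous_on_compose[of UNIV "\<lambda>z::'b. z \<bullet> z" "Gd a b"]
      by (simp add: o_def)
  qed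
  show ?thesis
    unfolding C1_on_def fd using d c
    by (auto simp: differentiable_def intro!: continuous_intros)
qed


lemma frontier_rho_zero:
  fixes \<Omega> :: "'a::euclidean_space set" and \<rho> :: "'a \<Rightarrow> real"
  assumes "open \<Omega>" "y \<in> frontier \<Omega>" "r > 0" "isCont \<rho> y"
    and eq: "\<Omega> \<inter> ball y r = {z \<in> ball y r. \<rho> z < 0}"
  shows "\<rho> y = 0"
proof -
  have yn: "y \<notin> \<Omega>" using assms(1,2) by (simp add: frontier_def interior_open)
  have yc: "y \<in> closure \<Omega>" using assms(2) by (simp add: frontier_def)
  have "\<not> \<rho> y < 0" using eq yn assms(3) by auto
  moreover have "\<not> \<rho> y > 0"
  proof
    assume p: "\<rho> y > 0"
    have "\<forall>\<^sub>F z in at y. \<rho> z > 0"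
    proof -
      have "(\<rho> \<longlongrightarrow> \<rho> y) (at y)" using assms(4) by (simp add: isCont_def)
      from order_tendstoD(1)[OF this p] show ?thesis by simp
    qed
    then obtain e where e: "e > 0" "\<And>z. z \<noteq> y \<Longrightarrow> dist z y < e \<Longrightarrow> \<rho> z > 0"
      by (auto simp: eventually_at)
    obtain z where z: "z \<in> \<Omega>" "dist z y < min e r"
      using yc e(1) assms(3) unfolding closure_approachable by (metis min_less_iff_conj)
    have "z \<noteq> y" using z yn by auto
    then have "\<rho> z > 0" using e z by auto
    moreover have "z \<in> \<Omega> \<inter> ball y r" using z by (auto simp: dist_commute)
    then have "\<rho> z < 0" using eq by blast
    ultimately show False by auto
  qed
  ultimately show ?thesis by auto
qed

lemma small_t:
  fixes d1 d2 r c :: real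
  assumes "0 < d1" "0 < d2" "0 < r" "0 \<le> c"
  shows "\<exists>t>0. t < d1 \<and> t < d2 \<and> t * c < r"
proof -
  define s where "s = r / (c + 1)"
  have s: "s > 0" "s * (c + 1) = r" using assms by (auto simp: s_def)
  define t where "t = min (min d1 d2) s / 2"
  have t: "t > 0" "t < d1" "t < d2" "t < s" using assms s by (auto simp: t_def)
  have "t * c \<le> s * c" using t assms by (intro mult_right_mono) auto
  also have "s * c < s * (c + 1)" using s by (simp add: distrib_left)
  finally show ?thesis using t s by auto
qed
lemma normal_unique:
  fixes \<Omega> :: "'a::euclidean_space set"
  assumes "open \<Omega>" "y \<in> frontier \<Omega>"
    and r1: "r1 > 0" and d1: "(\<rho>1 has_derivative (\<lambda>h. - c1 * (v1 \<bullet> h))) (at y)" and c1: "c1 > 0"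
    and n1: "norm v1 = 1" and e1: "\<Omega> \<inter> ball y r1 = {z \<in> ball y r1. \<rho>1 z < 0}"
    and r2: "r2 > 0" and d2: "(\<rho>2 has_derivative (\<lambda>h. - c2 * (v2 \<bullet> h))) (at y)" and c2: "c2 > 0"
    and n2: "norm v2 = 1" and e2: "\<Omega> \<inter> ball y r2 = {z \<in> ball y r2. \<rho>2 z < 0}"
  shows "v1 = v2"
proof (rule ccontr)
  assume ne: "v1 \<noteq> v2"
  define h where "h = v1 - v2"
  have i1: "v1 \<bullet> v1 = 1" using n1 by (metis power2_norm_eq_inner power_one)
  have i2: "v2 \<bullet> v2 = 1" using n2 by (metis power2_norm_eq_inner power_one)
  have "0 < norm h ^ 2" using ne by (simp add: h_def)
  also have "norm h ^ 2 = 2 - 2 * (v1 \<bullet> v2)"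
    using i1 i2 by (simp add: h_def power2_norm_eq_inner algebra_simps inner_commute)
  finally have lt: "v1 \<bullet> v2 < 1" by simp
  have h1: "v1 \<bullet> h > 0" using lt i1 by (simp add: h_def inner_diff_right)
  have h2: "v2 \<bullet> h < 0" using lt i2 by (simp add: h_def inner_diff_right inner_commute)
  have line: "((\<lambda>t::real. y + t *\<^sub>R h) has_derivative (\<lambda>t. t *\<^sub>R h)) (at 0)"
    by (auto intro!: derivative_eq_intros)
  have D1: "((\<lambda>t. \<rho>1 (y + t *\<^sub>R h)) has_real_derivative (- c1 * (v1 \<bullet> h))) (at 0)"
    unfolding has_field_derivative_def
    by (rule has_derivative_eq_rhs[OF has_derivative_compose[OF line, of \<rho>1, simplified, OF d1]]) (auto simp: fun_eq_iff)
  have D2: "((\<lambda>t. \<rho>2 (y + t *\<^sub>R h)) has_real_derivative (- c2 * (v2 \<bullet> h))) (at 0)"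
    unfolding has_field_derivative_def
    by (rule has_derivative_eq_rhs[OF has_derivative_compose[OF line, of \<rho>2, simplified, OF d2]]) (auto simp: fun_eq_iff)
  have z1: "\<rho>1 y = 0"
    by (rule frontier_rho_zero[OF assms(1,2) r1 has_derivative_continuous[OF d1] e1])
  have z2: "\<rho>2 y = 0"
    by (rule frontier_rho_zero[OF assms(1,2) r2 has_derivative_continuous[OF d2] e2])
  obtain dd1 where dd1: "dd1 > 0" "\<And>t. t > 0 \<Longrightarrow> t < dd1 \<Longrightarrow> \<rho>1 (y + t *\<^sub>R h) < 0"
    using DERIV_neg_dec_right[OF D1] c1 h1 z1 by (auto simp: mult_pos_pos)
  obtain dd2 where dd2: "dd2 > 0" "\<And>t. t > 0 \<Longrightarrow> t < dd2 \<Longrightarrow> \<rho>2 (y + t *\<^sub>R h) > 0"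
    using DERIV_pos_inc_right[OF D2] c2 h2 z2 by (auto simp: mult_pos_neg)
  have mr: "0 < min r1 r2" using r1 r2 by simp
  obtain t where tpos: "t > 0" and tl1: "t < dd1" and tl2: "t < dd2" and tr: "t * norm h < min r1 r2"
    using small_t[OF dd1(1) dd2(1) mr norm_ge_zero] by blast
  let ?z = "y + t *\<^sub>R h"
  have dz: "dist y ?z = t * norm h" using tpos by (simp add: dist_norm)
  have "dist y ?z < r1" "dist y ?z < r2" using dz tr by linarith+
  then have b1: "?z \<in> ball y r1" and b2: "?z \<in> ball y r2" by simp_all
  have "\<rho>1 ?z < 0" using dd1(2)[OF tpos tl1] .
  then have "?z \<in> \<Omega>" using e1 b1 by blast
  then have "\<rho>2 ?z < 0" using e2 b2 by blast
  moreover have "\<rho>2 ?z > 0" using dd2(2)[OF tpos tl2] .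
  ultimately show False by auto
qed

definition gradf :: "('a::euclidean_space \<Rightarrow> real) \<Rightarrow> 'a \<Rightarrow> 'a" where
  "gradf \<rho> z = (\<Sum>b\<in>Basis. frechet_derivative \<rho> (at z) b *\<^sub>R b)"

lemma gradf_inner:
  assumes "\<rho> differentiable (at z)"
  shows "frechet_derivative \<rho> (at z) h = gradf \<rho> z \<bullet> h"
proof -
  have L: "linear (frechet_derivative \<rho> (at z))" using assms by (rule linear_frechet_derivative)
  have "frechet_derivative \<rho> (at z) h = frechet_derivative \<rho> (at z) (\<Sum>b\<in>Basis. (h \<bullet> b) *\<^sub>R b)"
    by (simp add: euclidean_representation)
  also have "\<dots> = (\<Sum>b\<in>Basis. (h \<bullet> b) * frechet_derivative \<rho> (at z) b)"
    using L by (simp add: linear_sum linear_scale)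
  also have "\<dots> = gradf \<rho> z \<bullet> h"
    by (simp add: gradf_def inner_sum_right mult.commute inner_commute)
  finally show ?thesis .
qed

lemma gradf_nonzero:
  assumes "\<rho> differentiable (at z)" "frechet_derivative \<rho> (at z) \<noteq> (\<lambda>_. 0)"
  shows "gradf \<rho> z \<noteq> 0"
  using assms gradf_inner[OF assms(1)] by auto

lemma gradf_has_derivative:
  assumes "\<rho> differentiable (at z)" "gradf \<rho> z \<noteq> 0"
  shows "(\<rho> has_derivative (\<lambda>h. - norm (gradf \<rho> z) * ((- (1 / norm (gradf \<rho> z)) *\<^sub>R gradf \<rho> z) \<bullet> h))) (at z)"
proof -
  have "(\<rho> has_derivative frechet_derivative \<rho> (at z)) (at z)" using assms(1) frechet_derivative_works by blast
  moreover have "frechet_derivative \<rho> (at z) = (\<lambda>h. - norm (gradf \<rho> z) * ((- (1 / norm (gradf \<rho> z)) *\<^sub>R gradf \<rho> z) \<bullet> h))"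
    using assms by (auto simp: gradf_inner[OF assms(1)])
  ultimately show ?thesis by simp
qed

lemma C2_on_C1: "C2_on U f \<Longrightarrow> C1_on U f" by (simp add: C2_on_def)

lemma inward_normal_eq:
  fixes \<Omega> :: "'a::euclidean_space set"
  assumes dom: "C2_domain \<Omega>" and y: "y \<in> frontier \<Omega>"
    and r: "r > 0" and d: "(\<rho> has_derivative (\<lambda>h. - c * (v \<bullet> h))) (at y)" and c: "c > 0"
    and n: "norm v = 1" and e: "\<Omega> \<inter> ball y r = {z \<in> ball y r. \<rho> z < 0}"
  shows "inward_normal \<Omega> y = v"
proof -
  have op: "open \<Omega>" using dom by (simp add: C2_domain_def)
  let ?P = "\<lambda>v. norm v = 1 \<and> (\<exists>r \<rho>. local_defining_fn \<Omega> y r \<rho> \<and>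
      (\<exists>c>0. \<forall>h. frechet_derivative \<rho> (at y) h = - c * (v \<bullet> h)))"
  obtain r0 \<rho>0 where L0: "local_defining_fn \<Omega> y r0 \<rho>0" using dom y unfolding C2_domain_def by blast
  have dif0: "\<rho>0 differentiable (at y)"
    using L0 unfolding local_defining_fn_def C2_on_def C1_on_def by auto
  have g0: "gradf \<rho>0 y \<noteq> 0"
    using L0 gradf_nonzero[OF dif0] unfolding local_defining_fn_def by auto
  have "?P ((- (1 / norm (gradf \<rho>0 y))) *\<^sub>R gradf \<rho>0 y)"
  proof (intro conjI exI)
    show "norm ((- (1 / norm (gradf \<rho>0 y))) *\<^sub>R gradf \<rho>0 y) = 1" using g0 by simp
    show "local_defining_fn \<Omega> y r0 \<rho>0" by fact
    show "0 < norm (gradf \<rho>0 y)" using g0 by simp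
    show "\<forall>h. frechet_derivative \<rho>0 (at y) h = - norm (gradf \<rho>0 y) * ((- (1 / norm (gradf \<rho>0 y))) *\<^sub>R gradf \<rho>0 y \<bullet> h)"
      using g0 gradf_inner[OF dif0] by simp
  qed
  then have P: "?P (inward_normal \<Omega> y)" unfolding inward_normal_def by (rule someI)
  then obtain r' \<rho>' c' where L': "local_defining_fn \<Omega> y r' \<rho>'" and c': "c' > 0"
     and fd: "\<forall>h. frechet_derivative \<rho>' (at y) h = - c' * (inward_normal \<Omega> y \<bullet> h)" by blast
  have dif': "\<rho>' differentiable (at y)"
    using L' unfolding local_defining_fn_def C2_on_def C1_on_def by auto
  have "frechet_derivative \<rho>' (at y) = (\<lambda>h. - c' * (inward_normal \<Omega> y \<bullet> h))" using fd by auto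
  then have d': "(\<rho>' has_derivative (\<lambda>h. - c' * (inward_normal \<Omega> y \<bullet> h))) (at y)"
    using dif' frechet_derivative_works by metis
  show ?thesis
    using normal_unique[OF op y _ d' c' _ _ r d c n e] P L' unfolding local_defining_fn_def by auto
qed

lemma inward_normal_local:
  fixes \<Omega> :: "'a::euclidean_space set"
  assumes dom: "C2_domain \<Omega>" and L: "local_defining_fn \<Omega> y0 r \<rho>"
    and y: "y \<in> frontier \<Omega>" "y \<in> ball y0 r"
  shows "inward_normal \<Omega> y = (- (1 / norm (gradf \<rho> y))) *\<^sub>R gradf \<rho> y" "gradf \<rho> y \<noteq> 0"
proof -
  have dif: "\<rho> differentiable (at y)"
    using L y unfolding local_defining_fn_def C2_on_def C1_on_def by auto
  show g: "gradf \<rho> y \<noteq> 0"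
    using L y gradf_nonzero[OF dif] unfolding local_defining_fn_def by auto
  define r' where "r' = r - dist y0 y"
  have r': "r' > 0" using y by (simp add: r'_def)
  have sub: "ball y r' \<subseteq> ball y0 r" unfolding r'_def
    by (metis add.commute ball_subset_ball_iff diff_add_cancel dist_commute order_refl)
  have e: "\<Omega> \<inter> ball y r' = {z \<in> ball y r'. \<rho> z < 0}"
    using L sub unfolding local_defining_fn_def by blast
  show "inward_normal \<Omega> y = (- (1 / norm (gradf \<rho> y))) *\<^sub>R gradf \<rho> y"
    by (rule inward_normal_eq[OF dom y(1) r' gradf_has_derivative[OF dif g]]) (use g e in auto)
qed

lemma gradf_cont:
  assumes "C1_on U \<rho>" shows "continuous_on U (gradf \<rho>)"
  using assms unfolding gradf_def C1_on_def by (intro continuous_intros) auto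

lemma inward_normal_cont:
  fixes \<Omega> :: "'a::euclidean_space set"
  assumes dom: "C2_domain \<Omega>"
  shows "continuous_on (frontier \<Omega>) (inward_normal \<Omega>)"
    and "\<And>y. y \<in> frontier \<Omega> \<Longrightarrow> norm (inward_normal \<Omega> y) = 1"
proof -
  show "norm (inward_normal \<Omega> y) = 1" if y: "y \<in> frontier \<Omega>" for y
  proof -
    obtain r \<rho> where L: "local_defining_fn \<Omega> y r \<rho>" using dom y unfolding C2_domain_def by blast
    have "y \<in> ball y r" using L by (simp add: local_defining_fn_def)
    then show ?thesis using inward_normal_local[OF dom L y] by simp
  qed
  show "continuous_on (frontier \<Omega>) (inward_normal \<Omega>)"
    unfolding continuous_on_eq_continuous_within
  proof
    fix y0 assume y0: "y0 \<in> frontier \<Omega>"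
    obtain r \<rho> where L: "local_defining_fn \<Omega> y0 r \<rho>" using dom y0 unfolding C2_domain_def by blast
    have r: "r > 0" using L by (simp add: local_defining_fn_def)
    have gc: "continuous_on (ball y0 r) (gradf \<rho>)"
      using L by (intro gradf_cont) (simp add: local_defining_fn_def C2_on_def)
    have g0: "gradf \<rho> y0 \<noteq> 0" using inward_normal_local[OF dom L y0] r by simp
    have "isCont (gradf \<rho>) y0" using gc r by (simp add: continuous_on_eq_continuous_at)
    then have "isCont (\<lambda>y. (- (1 / norm (gradf \<rho> y))) *\<^sub>R gradf \<rho> y) y0"
      using g0 by (intro continuous_intros) auto
    then have "continuous (at y0 within frontier \<Omega>) (\<lambda>y. (- (1 / norm (gradf \<rho> y))) *\<^sub>R gradf \<rho> y)"
      by (rule continuous_at_imp_continuous_within)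
    then show "continuous (at y0 within frontier \<Omega>) (inward_normal \<Omega>)"
    proof (rule continuous_transform_within[OF _ r y0])
      fix y assume "y \<in> frontier \<Omega>" "dist y y0 < r"
      then show "(- (1 / norm (gradf \<rho> y))) *\<^sub>R gradf \<rho> y = inward_normal \<Omega> y"
        using inward_normal_local[OF dom L] by (simp add: dist_commute)
    qed
  qed
qed


lemma beta_cont:
  assumes "C1_on_surface S \<beta>" shows "continuous_on S \<beta>"
proof -
  obtain U b where U: "open U" "S \<subseteq> U" "C1_on U b" "\<forall>x\<in>S. b x = \<beta> x"
    using assms by (auto simp: C1_on_surface_def)
  have "continuous_on U b" using U(3) unfolding C1_on_def
    by (meson continuous_at_imp_continuous_on differentiable_imp_continuous_within)
  then have "continuous_on S b" using U(2) continuous_on_subset by blast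
  then show ?thesis using U(4) continuous_on_cong by force
qed

lemma sin_beta_lb:
  fixes \<beta> :: "'a::metric_space \<Rightarrow> real"
  assumes "compact S" "continuous_on S \<beta>" "\<forall>x\<in>S. 0 < \<beta> x \<and> \<beta> x < pi"
  shows "\<exists>c>0. \<forall>x\<in>S. sin (\<beta> x) \<ge> c"
proof (cases "S = {}")
  case True then show ?thesis by (auto intro: exI[of _ 1])
next
  case False
  have "continuous_on S (\<lambda>x. sin (\<beta> x))" using assms(2) by (intro continuous_intros)
  then obtain x0 where x0: "x0 \<in> S" "\<forall>x\<in>S. sin (\<beta> x0) \<le> sin (\<beta> x)"
    using continuous_attains_inf[OF assms(1) False] by blast
  have "sin (\<beta> x0) > 0" using assms(3) x0(1) by (auto intro: sin_gt_zero)
  then show ?thesis using x0 by blast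
qed

lemma bundle_closed:
  fixes \<Omega> :: "'a::euclidean_space set"
  assumes dom: "C2_domain \<Omega>" and bc: "continuous_on (frontier \<Omega>) \<beta>"
  shows "closed (capillary_bundle \<Omega> \<beta>)"
proof -
  let ?S = "frontier \<Omega> \<times> sphere (0::'a) 1"
  let ?f = "\<lambda>z::'a\<times>'a. \<bar>snd z \<bullet> inward_normal \<Omega> (fst z)\<bar> - \<bar>cos (\<beta> (fst z))\<bar>"
  have nc: "continuous_on (frontier \<Omega>) (inward_normal \<Omega>)" using inward_normal_cont[OF dom] by blast
  have fst_img: "fst ` ?S \<subseteq> frontier \<Omega>" by auto
  have c1: "continuous_on ?S (\<lambda>z. inward_normal \<Omega> (fst z))"
    by (rule continuous_on_compose2[OF nc continuous_on_fst[OF continuous_on_id] fst_img])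
  have c2: "continuous_on ?S (\<lambda>z. \<beta> (fst z))"
    by (rule continuous_on_compose2[OF bc continuous_on_fst[OF continuous_on_id] fst_img])
  have "continuous_on ?S ?f" using c1 c2 by (intro continuous_intros)
  then have "closed (?S \<inter> ?f -` {0})"
    by (rule continuous_closed_preimage) (auto intro: closed_Times)
  moreover have "capillary_bundle \<Omega> \<beta> = ?S \<inter> ?f -` {0}"
    by (auto simp: capillary_bundle_def capillary_fibre_def)
  ultimately show ?thesis by simp
qed

lemma conormal_facts:
  fixes \<Omega> :: "'a::euclidean_space set"
  assumes dom: "C2_domain \<Omega>" and bpos: "\<forall>x\<in>frontier \<Omega>. 0 < \<beta> x \<and> \<beta> x < pi"
    and z: "(x, v) \<in> capillary_bundle \<Omega> \<beta>"
  shows "norm (conormal \<Omega> \<beta> (x, v)) = 1"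
    and "conormal \<Omega> \<beta> (x, v) \<bullet> inward_normal \<Omega> x = sin (\<beta> x)"
    and "norm (vperp v (inward_normal \<Omega> x)) = sin (\<beta> x)"
proof -
  let ?n = "inward_normal \<Omega> x"
  have x: "x \<in> frontier \<Omega>" and v: "norm v = 1" and cv: "\<bar>v \<bullet> ?n\<bar> = \<bar>cos (\<beta> x)\<bar>"
    using z by (auto simp: capillary_bundle_def capillary_fibre_def)
  have n1: "norm ?n = 1" using inward_normal_cont(2)[OF dom x] .
  have vv: "v \<bullet> v = 1" using v by (metis power2_norm_eq_inner power_one)
  have nn: "?n \<bullet> ?n = 1" using n1 by (metis power2_norm_eq_inner power_one)
  have sp: "sin (\<beta> x) > 0" using bpos x by (auto intro: sin_gt_zero)
  have sq: "(v \<bullet> ?n)^2 = (cos (\<beta> x))^2" using cv by (metis power2_abs)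
  have "norm (vperp v ?n) ^ 2 = 1 - (v \<bullet> ?n)^2"
    unfolding vperp_def power2_norm_eq_inner
    by (simp add: inner_diff_left inner_diff_right vv nn inner_commute power2_eq_square)
  also have "\<dots> = (sin (\<beta> x))^2" using sq by (simp add: sin_squared_eq)
  finally have "norm (vperp v ?n) ^ 2 = (sin (\<beta> x))^2" .
  then show np: "norm (vperp v ?n) = sin (\<beta> x)"
    using sp by (metis norm_ge_zero power2_eq_iff_nonneg less_imp_le)
  have cn: "conormal \<Omega> \<beta> (x, v) = (1 / norm (vperp v ?n)) *\<^sub>R vperp v ?n"
    using z by (simp add: conormal_def)
  show "norm (conormal \<Omega> \<beta> (x, v)) = 1" using cn np sp by simp
  have "vperp v ?n \<bullet> ?n = 1 - (v \<bullet> ?n)^2"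
    unfolding vperp_def by (simp add: inner_diff_left inner_diff_right nn inner_commute power2_eq_square)
  also have "\<dots> = (sin (\<beta> x))^2" using sq by (simp add: sin_squared_eq)
  finally show "conormal \<Omega> \<beta> (x, v) \<bullet> ?n = sin (\<beta> x)"
    using cn np sp by (simp add: power2_eq_square)
qed

lemma conormal_norm_le: "norm (conormal \<Omega> \<beta> z) \<le> 1"
  unfolding conormal_def by (auto simp: case_prod_beta Let_def)

lemma conormal_out: "z \<notin> capillary_bundle \<Omega> \<beta> \<Longrightarrow> conormal \<Omega> \<beta> z = 0"
  unfolding conormal_def by auto

lemma conormal_measurable:
  fixes \<Omega> :: "'a::euclidean_space set"
  assumes dom: "C2_domain \<Omega>" and bpos: "\<forall>x\<in>frontier \<Omega>. 0 < \<beta> x \<and> \<beta> x < pi"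
    and bc: "continuous_on (frontier \<Omega>) \<beta>"
  shows "conormal \<Omega> \<beta> \<in> borel_measurable borel"
proof -
  let ?B = "capillary_bundle \<Omega> \<beta>"
  let ?N = "\<lambda>z::'a\<times>'a. (1 / norm (vperp (snd z) (inward_normal \<Omega> (fst z)))) *\<^sub>R vperp (snd z) (inward_normal \<Omega> (fst z))"
  have eq: "conormal \<Omega> \<beta> z = indicator ?B z *\<^sub>R ?N z" for z
    by (cases z) (auto simp: conormal_def indicator_def)
  have nc: "continuous_on (frontier \<Omega>) (inward_normal \<Omega>)" using inward_normal_cont[OF dom] by blast
  have fst_img: "fst ` ?B \<subseteq> frontier \<Omega>" by (auto simp: capillary_bundle_def)
  have c1: "continuous_on ?B (\<lambda>z. inward_normal \<Omega> (fst z))"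
    by (rule continuous_on_compose2[OF nc continuous_on_fst[OF continuous_on_id] fst_img])
  have c2: "continuous_on ?B (\<lambda>z. vperp (snd z) (inward_normal \<Omega> (fst z)))"
    unfolding vperp_def using c1 by (intro continuous_intros)
  have nz: "vperp (snd z) (inward_normal \<Omega> (fst z)) \<noteq> 0" if "z \<in> ?B" for z
  proof -
    obtain x v where zz: "z = (x, v)" by (cases z)
    have "norm (vperp v (inward_normal \<Omega> x)) = sin (\<beta> x)"
      using conormal_facts(3)[OF dom bpos] that zz by blast
    moreover have "sin (\<beta> x) > 0" using bpos that zz by (auto simp: capillary_bundle_def intro: sin_gt_zero)
    ultimately show ?thesis using zz by auto
  qed
  have c3: "continuous_on ?B ?N" using c2 nz by (intro continuous_intros) auto
  have "?B \<in> sets borel" using bundle_closed[OF dom bc] by (simp add: borel_closed)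
  then have "(\<lambda>z. indicator ?B z *\<^sub>R ?N z) \<in> borel_measurable borel"
    using borel_measurable_continuous_on_indicator c3 by blast
  moreover have "conormal \<Omega> \<beta> = (\<lambda>z. indicator ?B z *\<^sub>R ?N z)" by (rule ext) (rule eq)
  ultimately show ?thesis by (simp only:)
qed


lemma frob_nonneg: "frob W z \<ge> 0"
  unfolding frob_def by (auto intro!: sum_nonneg)

lemma W_le_frob:
  assumes "i \<in> Basis" "a \<in> Basis"
  shows "\<bar>W z i a\<bar> \<le> frob W z"
proof -
  have "(W z i a)^2 \<le> (\<Sum>a\<in>Basis. (W z i a)^2)"
    using assms by (intro member_le_sum) auto
  also have "\<dots> \<le> (\<Sum>i\<in>Basis. \<Sum>a\<in>Basis. (W z i a)^2)"
    using assms by (intro member_le_sum[where f="\<lambda>i. \<Sum>a\<in>Basis. (W z i a)^2"]) (auto intro: sum_nonneg)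
  finally have "sqrt ((W z i a)^2) \<le> frob W z" unfolding frob_def by (rule real_sqrt_le_mono)
  then show ?thesis by simp
qed

lemma Basis_inner_le: "i \<in> Basis \<Longrightarrow> norm (v::'a::euclidean_space) = 1 \<Longrightarrow> \<bar>v \<bullet> i\<bar> \<le> 1"
  by (metis Basis_le_norm)

definition Dpart :: "('a::euclidean_space \<times> 'a \<Rightarrow> real) \<Rightarrow> 'a \<Rightarrow> 'a \<times> 'a \<Rightarrow> real" where
  "Dpart \<phi> i z = (\<Sum>j\<in>Basis. ((if i = j then 1 else 0) - (snd z \<bullet> i) * (snd z \<bullet> j)) * Dx \<phi> j z)"

lemma curv_split:
  fixes W :: "'a::euclidean_space \<times> 'a \<Rightarrow> 'a \<Rightarrow> 'a \<Rightarrow> real"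
  assumes i: "i \<in> Basis" and v: "norm (snd z) = 1"
  shows "\<bar>curv_integrand W \<phi> i z - Dpart \<phi> i z\<bar>
     \<le> (1 + 2 * real DIM('a)) * frob W z * (\<bar>\<phi> z\<bar> + (\<Sum>a\<in>Basis. \<bar>Dv \<phi> a z\<bar>))"
proof -
  let ?v = "snd z" let ?F = "frob W z"
  have S2: "\<bar>\<Sum>a\<in>Basis. W z i a * Dv \<phi> a z\<bar> \<le> ?F * (\<Sum>a\<in>Basis. \<bar>Dv \<phi> a z\<bar>)"
  proof -
    have "\<bar>\<Sum>a\<in>Basis. W z i a * Dv \<phi> a z\<bar> \<le> (\<Sum>a\<in>Basis. \<bar>W z i a * Dv \<phi> a z\<bar>)" by (rule sum_abs)
    also have "\<dots> \<le> (\<Sum>a\<in>Basis. ?F * \<bar>Dv \<phi> a z\<bar>)"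
      by (intro sum_mono) (simp add: abs_mult mult_right_mono W_le_frob[OF i])
    finally show ?thesis by (simp add: sum_distrib_left)
  qed
  have S3: "\<bar>\<Sum>r\<in>Basis. W z r r * (?v \<bullet> i) + W z r i * (?v \<bullet> r)\<bar> \<le> 2 * real DIM('a) * ?F"
  proof -
    have "\<bar>\<Sum>r\<in>Basis. W z r r * (?v \<bullet> i) + W z r i * (?v \<bullet> r)\<bar>
        \<le> (\<Sum>r\<in>Basis. \<bar>W z r r * (?v \<bullet> i) + W z r i * (?v \<bullet> r)\<bar>)" by (rule sum_abs)
    also have "\<dots> \<le> (\<Sum>r\<in>(Basis::'a set). 2 * ?F)"
    proof (intro sum_mono)
      fix r :: 'a assume r: "r \<in> Basis"
      have "\<bar>W z r r * (?v \<bullet> i)\<bar> \<le> ?F * 1"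
        unfolding abs_mult using W_le_frob[OF r r] Basis_inner_le[OF i v] frob_nonneg[of W z]
        by (intro mult_mono) simp_all
      moreover have "\<bar>W z r i * (?v \<bullet> r)\<bar> \<le> ?F * 1"
        unfolding abs_mult using W_le_frob[OF r i] Basis_inner_le[OF r v] frob_nonneg[of W z]
        by (intro mult_mono) simp_all
      ultimately show "\<bar>W z r r * (?v \<bullet> i) + W z r i * (?v \<bullet> r)\<bar> \<le> 2 * ?F" by linarith
    qed
    finally show ?thesis by simp
  qed
  have eq: "curv_integrand W \<phi> i z - Dpart \<phi> i z =
      (\<Sum>a\<in>Basis. W z i a * Dv \<phi> a z) - (\<Sum>r\<in>Basis. W z r r * (?v \<bullet> i) + W z r i * (?v \<bullet> r)) * \<phi> z"
    by (simp add: curv_integrand_def Dpart_def Let_def)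
  have "\<bar>(\<Sum>r\<in>Basis. W z r r * (?v \<bullet> i) + W z r i * (?v \<bullet> r)) * \<phi> z\<bar> \<le> 2 * real DIM('a) * ?F * \<bar>\<phi> z\<bar>"
    unfolding abs_mult using S3 by (intro mult_right_mono) auto
  then have "\<bar>curv_integrand W \<phi> i z - Dpart \<phi> i z\<bar> \<le> ?F * (\<Sum>a\<in>Basis. \<bar>Dv \<phi> a z\<bar>) + 2 * real DIM('a) * ?F * \<bar>\<phi> z\<bar>"
    unfolding eq using S2 by linarith
  also have "\<dots> \<le> (1 + 2 * real DIM('a)) * ?F * (\<bar>\<phi> z\<bar> + (\<Sum>a\<in>Basis. \<bar>Dv \<phi> a z\<bar>))"
  proof -
    have A: "0 \<le> ?F * (\<Sum>a\<in>Basis. \<bar>Dv \<phi> a z\<bar>)" by (intro mult_nonneg_nonneg frob_nonneg sum_nonneg) auto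
    have B: "0 \<le> ?F * \<bar>\<phi> z\<bar>" by (intro mult_nonneg_nonneg frob_nonneg) auto
    have C: "0 \<le> real DIM('a) * (?F * (\<Sum>a\<in>Basis. \<bar>Dv \<phi> a z\<bar>))" using A by auto
    show ?thesis using A B C by (simp add: algebra_simps)
  qed
  finally show ?thesis .
qed

lemma Dpart_bound:
  fixes \<phi> :: "'a::euclidean_space \<times> 'a \<Rightarrow> real"
  assumes i: "i \<in> Basis" and v: "norm (snd z) = 1"
  shows "\<bar>Dpart \<phi> i z\<bar> \<le> 2 * (\<Sum>j\<in>Basis. \<bar>Dx \<phi> j z\<bar>)"
proof -
  have "\<bar>Dpart \<phi> i z\<bar> \<le> (\<Sum>j\<in>Basis. \<bar>((if i = j then 1 else 0) - (snd z \<bullet> i) * (snd z \<bullet> j)) * Dx \<phi> j z\<bar>)"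
    unfolding Dpart_def by (rule sum_abs)
  also have "\<dots> \<le> (\<Sum>j\<in>Basis. 2 * \<bar>Dx \<phi> j z\<bar>)"
  proof (intro sum_mono)
    fix j :: 'a assume j: "j \<in> Basis"
    have "\<bar>(snd z \<bullet> i) * (snd z \<bullet> j)\<bar> \<le> 1 * 1"
      unfolding abs_mult using Basis_inner_le[OF i v] Basis_inner_le[OF j v] by (intro mult_mono) auto
    then have "\<bar>(if i = j then 1 else 0) - (snd z \<bullet> i) * (snd z \<bullet> j)\<bar> \<le> 2"
    proof -
      have "\<bar>(if i = j then 1 else 0) - (snd z \<bullet> i) * (snd z \<bullet> j)\<bar>
          \<le> \<bar>(if i = j then 1 else 0::real)\<bar> + \<bar>(snd z \<bullet> i) * (snd z \<bullet> j)\<bar>" by (rule abs_triangle_ineq4)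
      moreover have "\<bar>(if i = j then 1 else 0::real)\<bar> \<le> 1" by simp
      ultimately show ?thesis using \<open>\<bar>(snd z \<bullet> i) * (snd z \<bullet> j)\<bar> \<le> 1 * 1\<close> by linarith
    qed
    then show "\<bar>((if i = j then 1 else 0) - (snd z \<bullet> i) * (snd z \<bullet> j)) * Dx \<phi> j z\<bar> \<le> 2 * \<bar>Dx \<phi> j z\<bar>"
      unfolding abs_mult by (intro mult_right_mono) auto
  qed
  finally show ?thesis by (simp add: sum_distrib_left)
qed

lemma Dpart_trace:
  fixes \<phi> :: "'a \<Rightarrow> 'a::euclidean_space \<times> 'a \<Rightarrow> real"
  assumes v: "norm (snd z) = 1" and D: "\<And>i j. i \<in> Basis \<Longrightarrow> j \<in> Basis \<Longrightarrow> Dx (\<phi> i) j z = j \<bullet> i"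
  shows "(\<Sum>i\<in>Basis. Dpart (\<phi> i) i z) = real DIM('a) - 1"
proof -
  have "(\<Sum>i\<in>Basis. Dpart (\<phi> i) i z) = (\<Sum>i\<in>(Basis::'a set). 1 - (snd z \<bullet> i)^2)"
  proof (intro sum.cong refl)
    fix i :: 'a assume i: "i \<in> Basis"
    have "Dpart (\<phi> i) i z = (\<Sum>j\<in>Basis. ((if i = j then 1 else 0) - (snd z \<bullet> i) * (snd z \<bullet> j)) * (if i = j then 1 else 0))"
      unfolding Dpart_def using D i by (intro sum.cong refl) (auto simp: inner_Basis)
    also have "\<dots> = 1 - (snd z \<bullet> i)^2" using i by (simp add: power2_eq_square if_distrib sum.delta cong: if_cong)
    finally show "Dpart (\<phi> i) i z = 1 - (snd z \<bullet> i)^2" .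
  qed
  also have "\<dots> = real DIM('a) - (\<Sum>i\<in>Basis. (snd z \<bullet> i)^2)" by (simp add: sum_subtractf)
  also have "(\<Sum>i\<in>Basis. (snd z \<bullet> i)^2) = (norm (snd z))^2"
    unfolding power2_norm_eq_inner by (subst euclidean_inner) (simp add: power2_eq_square)
  finally show ?thesis using v by simp
qed


lemma msupport_null:
  fixes \<mu> :: "'a::euclidean_space measure"
  assumes sb: "sets \<mu> = sets borel"
  shows "- msupport \<mu> \<in> null_sets \<mu>"
proof -
  let ?F = "{ball x r | x r. r > 0 \<and> emeasure \<mu> (ball x r) = 0}"
  have eq: "- msupport \<mu> = \<Union>?F"
  proof
    show "- msupport \<mu> \<subseteq> \<Union>?F"
    proof
      fix x assume "x \<in> - msupport \<mu>"
      then obtain r where r: "r > 0" "\<not> emeasure \<mu> (ball x r) > 0" unfolding msupport_def by blast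
      then have "emeasure \<mu> (ball x r) = 0" by (simp add: not_gr_zero)
      then have "ball x r \<in> ?F" using r(1) by blast
      moreover have "x \<in> ball x r" using r(1) by simp
      ultimately show "x \<in> \<Union>?F" by blast
    qed
    show "\<Union>?F \<subseteq> - msupport \<mu>"
    proof
      fix x assume "x \<in> \<Union>?F"
      then obtain y r where yr: "r > 0" "emeasure \<mu> (ball y r) = 0" "x \<in> ball y r" by auto
      define r' where "r' = r - dist y x"
      have r': "r' > 0" using yr by (simp add: r'_def)
      have sub: "ball x r' \<subseteq> ball y r"
      proof
        fix z assume "z \<in> ball x r'"
        then have "dist x z < r'" by simp
        moreover have "dist y z \<le> dist y x + dist x z" by (rule dist_triangle)
        ultimately have "dist y z < r" unfolding r'_def by linarith
        then show "z \<in> ball y r" by simp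
      qed
      have "ball y r \<in> sets \<mu>" using sb by simp
      then have "emeasure \<mu> (ball x r') \<le> emeasure \<mu> (ball y r)" by (rule emeasure_mono[OF sub])
      then have "emeasure \<mu> (ball x r') = 0" using yr by simp
      then have "\<not> (\<forall>r>0. emeasure \<mu> (ball x r) > 0)" using r' by force
      then show "x \<in> - msupport \<mu>" unfolding msupport_def by blast
    qed
  qed
  obtain F' where F': "F' \<subseteq> ?F" "countable F'" "\<Union>F' = \<Union>?F"
    using Lindelof[of ?F] by auto
  have "(\<Union>S\<in>F'. S) \<in> null_sets \<mu>"
  proof (rule null_sets_UN'[OF F'(2)])
    fix S assume "S \<in> F'"
    then obtain x r where "S = ball x r" "emeasure \<mu> (ball x r) = 0" using F'(1) by blast
    then show "S \<in> null_sets \<mu>" using sb by (simp add: null_sets_def)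
  qed
  then show ?thesis using eq F'(3) by simp
qed

lemma weight_emeasure:
  fixes M :: "('a::euclidean_space \<times> 'a) measure"
  assumes sb: "sets M = sets borel" and S: "S \<in> sets borel"
  shows "emeasure (weight M) S = emeasure M (fst -` S)"
proof -
  have sp: "space M = UNIV" using sets_eq_imp_space_eq[OF sb] by simp
  have "fst \<in> borel_measurable (borel :: ('a \<times> 'a) measure)"
    by (intro borel_measurable_continuous_onI continuous_intros)
  moreover have "measurable M (borel :: 'a measure) = measurable (borel :: ('a \<times> 'a) measure) borel"
    by (rule measurable_cong_sets[OF sb refl])
  ultimately have m: "fst \<in> measurable M (borel :: 'a measure)" by simp
  show ?thesis unfolding weight_def using emeasure_distr[OF m, of S] S sp by simp
qed

lemma ae_from_null:
  assumes sb: "sets M = sets borel" and A: "A \<in> sets borel" and n: "emeasure M (- A) = 0"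
  shows "AE z in M. z \<in> A" and "emeasure M UNIV = emeasure M A"
proof -
  have sp: "space M = UNIV" using sets_eq_imp_space_eq[OF sb] by simp
  have "- A \<in> null_sets M" using n A sb by (auto simp: null_sets_def)
  then show ae: "AE z in M. z \<in> A" by (rule AE_I') (auto simp: sp)
  show "emeasure M UNIV = emeasure M A"
    by (rule emeasure_eq_AE) (use ae A sb sp in auto)
qed


lemma C1c_cut:
  fixes F :: "'a::euclidean_space \<times> 'a \<Rightarrow> real"
  assumes F: "C1_on UNIV F" and ab: "a < b"
  shows "C1c (\<lambda>z. F z * Gf a b (z \<bullet> z))"
  unfolding C1c_def
proof
  show "C1_on UNIV (\<lambda>z. F z * Gf a b (z \<bullet> z))" by (rule C1_on_mult[OF F C1_cutoff[OF ab]])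
  have "{z. F z * Gf a b (z \<bullet> z) \<noteq> 0} \<subseteq> {z. z \<bullet> z \<le> b}"
    using Gf_zero[OF ab] by (auto simp: not_le) (meson less_le_not_le nle_le)
  moreover have "closed {z::'a \<times> 'a. z \<bullet> z \<le> b}"
    by (intro closed_Collect_le continuous_intros)
  ultimately have "closure {z. F z * Gf a b (z \<bullet> z) \<noteq> 0} \<subseteq> {z. z \<bullet> z \<le> b}"
    by (rule closure_minimal)
  moreover have "{z::'a \<times> 'a. z \<bullet> z \<le> b} \<subseteq> cball 0 (sqrt b)"
    by (auto simp: norm_eq_sqrt_inner real_sqrt_le_mono)
  ultimately have "closure {z. F z * Gf a b (z \<bullet> z) \<noteq> 0} \<subseteq> cball 0 (sqrt b)" by blast
  then show "compact (closure {z. F z * Gf a b (z \<bullet> z) \<noteq> 0})"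
    by (meson bounded_cball bounded_subset closed_closure compact_eq_bounded_closed)
qed

lemma C1c_cont:
  assumes "C1c \<phi>"
  shows "continuous_on UNIV \<phi>" "continuous_on UNIV (Dx \<phi> j)" "continuous_on UNIV (Dv \<phi> j)"
proof -
  have C: "C1_on UNIV \<phi>" using assms by (simp add: C1c_def)
  show "continuous_on UNIV \<phi>" by (rule C1_on_UNIV_cont[OF C])
  show "continuous_on UNIV (Dx \<phi> j)" "continuous_on UNIV (Dv \<phi> j)"
    using C unfolding C1_on_def Dx_def Dv_def by blast+
qed

lemma C1c_bounded:
  assumes "C1c \<phi>" shows "\<exists>B. \<forall>z. \<bar>\<phi> z\<bar> \<le> B"
proof -
  let ?K = "closure {z. \<phi> z \<noteq> 0}"
  have K: "compact ?K" using assms by (simp add: C1c_def)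
  have "continuous_on ?K \<phi>" using C1c_cont(1)[OF assms] continuous_on_subset by blast
  then have "bounded (\<phi> ` ?K)" using K compact_continuous_image compact_imp_bounded by blast
  then obtain B where B: "\<forall>y\<in>\<phi> ` ?K. norm y \<le> B" by (auto simp: bounded_iff)
  have "\<bar>\<phi> z\<bar> \<le> max B 0" for z
  proof (cases "\<phi> z = 0")
    case False
    then have "z \<in> ?K" by (simp add: closure_def)
    then show ?thesis using B by force
  qed simp
  then show ?thesis by blast
qed

lemma region_derivs:
  fixes i :: "'a::euclidean_space"
  assumes ab: "a < b" and z: "z \<bullet> z < a"
  defines "\<phi> \<equiv> (\<lambda>z::'a \<times> 'a. (fst z \<bullet> i) * Gf a b (z \<bullet> z))"
  shows "Dx \<phi> j z = j \<bullet> i" "Dv \<phi> j z = 0" "\<phi> z = fst z \<bullet> i"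
proof -
  have op: "open {z::'a \<times> 'a. z \<bullet> z < a}" by (intro open_Collect_less continuous_intros)
  have lin: "((\<lambda>z::'a \<times> 'a. fst z \<bullet> i) has_derivative (\<lambda>h. fst h \<bullet> i)) (at z)"
    by (intro derivative_eq_intros) auto
  have eq: "\<And>y. y \<in> {z. z \<bullet> z < a} \<Longrightarrow> fst y \<bullet> i = \<phi> y"
    using Gf_one[OF ab] by (auto simp: \<phi>_def)
  have "(\<phi> has_derivative (\<lambda>h. fst h \<bullet> i)) (at z)"
    by (rule has_derivative_transform_within_open[OF lin op _ eq]) (use z in auto)
  then have fd: "frechet_derivative \<phi> (at z) = (\<lambda>h. fst h \<bullet> i)" using frechet_derivative_at by metis
  show "Dx \<phi> j z = j \<bullet> i" by (simp add: Dx_def fd inner_commute)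
  show "Dv \<phi> j z = 0" by (simp add: Dv_def fd)
  show "\<phi> z = fst z \<bullet> i" using eq z by auto
qed

lemma young_simple:
  fixes x e p :: real
  assumes "x \<ge> 0" "e > 0" "p \<ge> 1"
  shows "x \<le> e + e powr (1 - p) * x powr p"
proof (cases "x \<le> e")
  case True
  have "0 \<le> e powr (1 - p) * x powr p" by simp
  then show ?thesis using True by linarith
next
  case False
  then have q: "x / e \<ge> 1" using assms by simp
  have "x / e = (x / e) powr 1" using assms by simp
  also have "\<dots> \<le> (x / e) powr p" using q assms by (intro powr_mono) auto
  also have "\<dots> = x powr p / e powr p" using assms by (simp add: powr_divide)
  finally have "x \<le> e * (x powr p / e powr p)" using assms by (simp add: divide_le_eq mult.commute)
  also have "\<dots> = e powr (1 - p) * x powr p" using assms by (simp add: powr_diff field_simps)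
  finally show ?thesis by (smt (verit) assms(2) powr_ge_zero)
qed


lemma frob_le_max:
  fixes W :: "'a \<times> 'a \<Rightarrow> 'a::euclidean_space \<Rightarrow> 'a \<Rightarrow> real"
  shows "\<exists>i0\<in>Basis. \<exists>a0\<in>Basis. frob W z \<le> real DIM('a) * \<bar>W z i0 a0\<bar>"
proof -
  let ?S = "(\<lambda>(i, a). \<bar>W z i a\<bar>) ` ((Basis::'a set) \<times> (Basis::'a set))"
  have fin: "finite ?S" by simp
  have ne: "?S \<noteq> {}" by simp
  have "Max ?S \<in> ?S" by (rule Max_in[OF fin ne])
  then obtain pr where pr: "pr \<in> Basis \<times> Basis" "Max ?S = (case pr of (i, a) \<Rightarrow> \<bar>W z i a\<bar>)" by blast
  obtain i0 a0 where "pr = (i0, a0)" by (cases pr)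
  then have ia: "i0 \<in> Basis" "a0 \<in> Basis" "Max ?S = \<bar>W z i0 a0\<bar>" using pr by auto
  have le: "\<bar>W z i a\<bar> \<le> \<bar>W z i0 a0\<bar>" if "i \<in> Basis" "a \<in> Basis" for i a
    using Max_ge[OF fin, of "\<bar>W z i a\<bar>"] that ia(3) by force
  have "(\<Sum>i\<in>(Basis::'a set). \<Sum>a\<in>(Basis::'a set). (W z i a)^2) \<le> (\<Sum>i\<in>(Basis::'a set). \<Sum>a\<in>(Basis::'a set). (W z i0 a0)^2)"
    using le by (intro sum_mono) (simp add: abs_le_square_iff)
  also have "\<dots> = (real DIM('a) * \<bar>W z i0 a0\<bar>)^2" by (simp add: power2_eq_square)
  finally have "frob W z \<le> sqrt ((real DIM('a) * \<bar>W z i0 a0\<bar>)^2)"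
    unfolding frob_def by (rule real_sqrt_le_mono)
  then show ?thesis using ia by auto
qed

lemma frob_measurable:
  assumes "\<forall>i\<in>Basis. \<forall>a\<in>Basis. (\<lambda>z. W z i a) \<in> borel_measurable M"
  shows "frob W \<in> borel_measurable M"
proof -
  have "(\<lambda>z. \<Sum>i\<in>Basis. \<Sum>a\<in>Basis. (W z i a)^2) \<in> borel_measurable M"
    using assms by (intro borel_measurable_sum borel_measurable_power) auto
  note [measurable] = this
  have "(\<lambda>z. sqrt (\<Sum>i\<in>Basis. \<Sum>a\<in>Basis. (W z i a)^2)) \<in> borel_measurable M"
    by measurable
  then show ?thesis unfolding frob_def[abs_def] .
qed

lemma frob_Lp:
  fixes V :: "('a::euclidean_space \<times> 'a) measure"
  assumes fin: "finite_measure (completion V)" and Lp: "curvature_in_Lp p V W" and p: "p \<ge> 1"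
  shows "frob W \<in> borel_measurable (completion V)"
    and "integrable (completion V) (\<lambda>z. frob W z powr p)"
    and "integrable (completion V) (frob W)"
    and "\<And>e. e > 0 \<Longrightarrow> integral\<^sup>L (completion V) (frob W)
          \<le> e * measure (completion V) (space (completion V)) + e powr (1 - p) * Lp_norm_pow p V W"
proof -
  let ?M = "completion V"
  interpret finite_measure ?M by (rule fin)
  have Wm: "\<forall>i\<in>Basis. \<forall>a\<in>Basis. (\<lambda>z. W z i a) \<in> borel_measurable ?M"
    using Lp by (simp add: curvature_in_Lp_def)
  show fm: "frob W \<in> borel_measurable ?M" by (rule frob_measurable[OF Wm])
  let ?g = "\<lambda>z. real DIM('a) powr p * (\<Sum>i\<in>Basis. \<Sum>a\<in>Basis. \<bar>W z i a\<bar> powr p)"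
  have gi: "integrable ?M ?g"
    using Lp by (intro integrable_mult_right integrable_sum) (auto simp: curvature_in_Lp_def)
  have bnd: "frob W z powr p \<le> ?g z" for z
  proof -
    obtain i0 a0 where ia: "i0 \<in> Basis" "a0 \<in> Basis" "frob W z \<le> real DIM('a) * \<bar>W z i0 a0\<bar>"
      using frob_le_max[of W z] by blast
    have "frob W z powr p \<le> (real DIM('a) * \<bar>W z i0 a0\<bar>) powr p"
      using ia(3) frob_nonneg[of W z] p by (intro powr_mono2) auto
    also have "\<dots> = real DIM('a) powr p * \<bar>W z i0 a0\<bar> powr p" by (simp add: powr_mult)
    also have "\<bar>W z i0 a0\<bar> powr p \<le> (\<Sum>a\<in>Basis. \<bar>W z i0 a\<bar> powr p)"
      using ia by (intro member_le_sum) auto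
    also have "\<dots> \<le> (\<Sum>i\<in>Basis. \<Sum>a\<in>Basis. \<bar>W z i a\<bar> powr p)"
      using ia by (intro member_le_sum[where f="\<lambda>i. \<Sum>a\<in>Basis. \<bar>W z i a\<bar> powr p"]) (auto intro: sum_nonneg)
    finally show ?thesis by (simp add: mult_left_mono)
  qed
  have pm: "(\<lambda>z. frob W z powr p) \<in> borel_measurable ?M" using fm by measurable
  show ip: "integrable ?M (\<lambda>z. frob W z powr p)"
    by (rule Bochner_Integration.integrable_bound[OF gi pm]) (auto intro!: AE_I2 simp: order_trans[OF _ bnd] frob_nonneg)
  have young: "frob W z \<le> e + e powr (1 - p) * frob W z powr p" if "e > 0" for e z
    using young_simple[OF frob_nonneg that p] .
  have ic: "integrable ?M (\<lambda>z. 1 + 1 powr (1 - p) * frob W z powr p)"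
    using ip by (intro Bochner_Integration.integrable_add integrable_mult_right) auto
  show ifr: "integrable ?M (frob W)"
  proof (rule Bochner_Integration.integrable_bound[OF ic fm])
    have "norm (frob W z) \<le> norm (1 + 1 powr (1 - p) * frob W z powr p)" for z
    proof -
      have a: "0 \<le> frob W z" by (rule frob_nonneg)
      have b: "0 \<le> 1 + 1 powr (1 - p) * frob W z powr p" by (simp add: add_nonneg_nonneg)
      have "frob W z \<le> 1 + 1 powr (1 - p) * frob W z powr p" using young[of 1 z] by simp
      then show ?thesis using a b by (simp only: real_norm_def abs_of_nonneg)
    qed
    then show "AE x in ?M. norm (frob W x) \<le> norm (1 + 1 powr (1 - p) * frob W x powr p)"
      by (intro AE_I2)
  qed
  fix e :: real assume e: "e > 0"
  have "integral\<^sup>L ?M (frob W) \<le> integral\<^sup>L ?M (\<lambda>z. e + e powr (1 - p) * frob W z powr p)"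
    using ifr ip young[OF e] by (intro Bochner_Integration.integral_mono Bochner_Integration.integrable_add integrable_mult_right) auto
  also have "\<dots> = e * measure ?M (space ?M) + e powr (1 - p) * Lp_norm_pow p V W"
    using ip by (simp add: Lp_norm_pow_def)
  finally show "integral\<^sup>L ?M (frob W) \<le> e * measure ?M (space ?M) + e powr (1 - p) * Lp_norm_pow p V W" .
qed


lemma sum_identity:
  fixes \<Omega> :: "'a::euclidean_space set" and \<psi> :: "'a \<Rightarrow> 'a \<times> 'a \<Rightarrow> real"
  assumes curv: "has_capillary_curvature \<Omega> \<beta> V \<Gamma> W"
    and C: "\<And>i. i \<in> Basis \<Longrightarrow> C1c (\<psi> i)"
    and fG: "finite_measure \<Gamma>" and sG: "sets \<Gamma> = sets borel"
    and cm: "conormal \<Omega> \<beta> \<in> borel_measurable borel"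
  shows "integrable (completion V) (\<lambda>z. \<Sum>i\<in>Basis. curv_integrand W (\<psi> i) i z)"
    and "integrable \<Gamma> (\<lambda>z. \<Sum>i\<in>Basis. \<psi> i z * (conormal \<Omega> \<beta> z \<bullet> i))"
    and "(\<integral>z. (\<Sum>i\<in>Basis. curv_integrand W (\<psi> i) i z) \<partial>completion V)
          = - (\<integral>z. (\<Sum>i\<in>Basis. \<psi> i z * (conormal \<Omega> \<beta> z \<bullet> i)) \<partial>\<Gamma>)"
proof -
  have iV: "integrable (completion V) (curv_integrand W (\<psi> i) i)"
    and eq: "(\<integral>z. curv_integrand W (\<psi> i) i z \<partial>completion V) = - (\<integral>z. \<psi> i z * (conormal \<Omega> \<beta> z \<bullet> i) \<partial>\<Gamma>)"
    if i: "i \<in> Basis" for i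
  proof -
    have "\<forall>\<phi>. C1c \<phi> \<longrightarrow> (\<forall>i\<in>Basis.
        integrable (completion V) (curv_integrand W \<phi> i) \<and>
        (\<integral>z. curv_integrand W \<phi> i z \<partial>completion V) = - (\<integral>z. \<phi> z * (conormal \<Omega> \<beta> z \<bullet> i) \<partial>\<Gamma>))"
      using curv unfolding has_capillary_curvature_def by blast
    note H = this[rule_format, OF C[OF i] i]
    show "integrable (completion V) (curv_integrand W (\<psi> i) i)" by (rule conjunct1[OF H])
    show "(\<integral>z. curv_integrand W (\<psi> i) i z \<partial>completion V) = - (\<integral>z. \<psi> i z * (conormal \<Omega> \<beta> z \<bullet> i) \<partial>\<Gamma>)"
      by (rule conjunct2[OF H])
  qed
  have iG: "integrable \<Gamma> (\<lambda>z. \<psi> i z * (conormal \<Omega> \<beta> z \<bullet> i))" if i: "i \<in> Basis" for i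
  proof -
    interpret finite_measure \<Gamma> by (rule fG)
    obtain B where B: "\<forall>z. \<bar>\<psi> i z\<bar> \<le> B" using C1c_bounded[OF C[OF i]] by blast
    have mc: "measurable \<Gamma> (borel :: real measure) = measurable (borel :: ('a \<times> 'a) measure) borel"
      by (rule measurable_cong_sets[OF sG refl])
    have [measurable]: "\<psi> i \<in> borel_measurable borel"
      using C1c_cont(1)[OF C[OF i]] by (rule borel_measurable_continuous_onI)
    note [measurable] = cm
    have "(\<lambda>z. \<psi> i z * (conormal \<Omega> \<beta> z \<bullet> i)) \<in> borel_measurable borel"
      by measurable
    then have m: "(\<lambda>z. \<psi> i z * (conormal \<Omega> \<beta> z \<bullet> i)) \<in> borel_measurable \<Gamma>" using mc by simp
    have "norm (\<psi> i z * (conormal \<Omega> \<beta> z \<bullet> i)) \<le> B" for z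
    proof -
      have "\<bar>conormal \<Omega> \<beta> z \<bullet> i\<bar> \<le> 1"
        using Basis_le_norm[OF i, of "conormal \<Omega> \<beta> z"] conormal_norm_le[of \<Omega> \<beta> z] by (simp add: inner_commute)
      moreover have Bz: "\<bar>\<psi> i z\<bar> \<le> B" using B by blast
      moreover have "0 \<le> B" using Bz by linarith
      ultimately have "\<bar>\<psi> i z\<bar> * \<bar>conormal \<Omega> \<beta> z \<bullet> i\<bar> \<le> B * 1"
        by (intro mult_mono) simp_all
      then show ?thesis by (simp add: abs_mult)
    qed
    then show ?thesis by (intro integrable_const_bound[where B=B] AE_I2 m)
  qed
  show "integrable (completion V) (\<lambda>z. \<Sum>i\<in>Basis. curv_integrand W (\<psi> i) i z)"
    by (rule Bochner_Integration.integrable_sum) (rule iV)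
  show "integrable \<Gamma> (\<lambda>z. \<Sum>i\<in>Basis. \<psi> i z * (conormal \<Omega> \<beta> z \<bullet> i))"
    by (rule Bochner_Integration.integrable_sum) (rule iG)
  show "(\<integral>z. (\<Sum>i\<in>Basis. curv_integrand W (\<psi> i) i z) \<partial>completion V)
          = - (\<integral>z. (\<Sum>i\<in>Basis. \<psi> i z * (conormal \<Omega> \<beta> z \<bullet> i)) \<partial>\<Gamma>)"
  proof -
    have "(\<integral>z. (\<Sum>i\<in>Basis. curv_integrand W (\<psi> i) i z) \<partial>completion V)
        = (\<Sum>i\<in>Basis. \<integral>z. curv_integrand W (\<psi> i) i z \<partial>completion V)"
      by (rule Bochner_Integration.integral_sum) (rule iV)
    also have "\<dots> = (\<Sum>i\<in>Basis. - (\<integral>z. \<psi> i z * (conormal \<Omega> \<beta> z \<bullet> i) \<partial>\<Gamma>))"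
      by (rule sum.cong[OF refl]) (rule eq)
    also have "\<dots> = - (\<Sum>i\<in>Basis. (\<integral>z. \<psi> i z * (conormal \<Omega> \<beta> z \<bullet> i) \<partial>\<Gamma>))"
      by (rule sum_negf)
    also have "(\<Sum>i\<in>Basis. (\<integral>z. \<psi> i z * (conormal \<Omega> \<beta> z \<bullet> i) \<partial>\<Gamma>))
        = (\<integral>z. (\<Sum>i\<in>Basis. \<psi> i z * (conormal \<Omega> \<beta> z \<bullet> i)) \<partial>\<Gamma>)"
      by (rule Bochner_Integration.integral_sum[symmetric]) (rule iG)
    finally show ?thesis .
  qed
qed

lemma sum_inner_Basis: "(\<Sum>i\<in>Basis. (x \<bullet> i) * (y \<bullet> i)) = (x::'a::euclidean_space) \<bullet> y"
  by (rule euclidean_inner[symmetric])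


lemma V_side1:
  fixes W :: "'a \<times> 'a \<Rightarrow> 'a::euclidean_space \<Rightarrow> 'a \<Rightarrow> real"
  assumes ab: "a < b" and v: "norm (snd z) = 1" and za: "z \<bullet> z < a" and nx: "norm (fst z) \<le> d"
  shows "(\<Sum>i\<in>Basis. curv_integrand W (\<lambda>z. (fst z \<bullet> i) * Gf a b (z \<bullet> z)) i z)
     \<ge> (real DIM('a) - 1) - real DIM('a) * (1 + 2 * real DIM('a)) * d * frob W z"
proof -
  let ?\<phi> = "\<lambda>i z. (fst z \<bullet> i) * Gf a b (z \<bullet> z)"
  let ?n = "real DIM('a)"
  have tr: "(\<Sum>i\<in>Basis. Dpart (?\<phi> i) i z) = ?n - 1"
    by (rule Dpart_trace[OF v]) (rule region_derivs(1)[OF ab za])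
  have err: "\<bar>curv_integrand W (?\<phi> i) i z - Dpart (?\<phi> i) i z\<bar> \<le> (1 + 2 * ?n) * d * frob W z"
    if i: "i \<in> Basis" for i
  proof -
    have "\<bar>curv_integrand W (?\<phi> i) i z - Dpart (?\<phi> i) i z\<bar>
        \<le> (1 + 2 * ?n) * frob W z * (\<bar>?\<phi> i z\<bar> + (\<Sum>a\<in>Basis. \<bar>Dv (?\<phi> i) a z\<bar>))"
      by (rule curv_split[OF i v])
    also have "\<bar>?\<phi> i z\<bar> + (\<Sum>a\<in>Basis. \<bar>Dv (?\<phi> i) a z\<bar>) = \<bar>fst z \<bullet> i\<bar>"
      using region_derivs(2)[OF ab za, of i] Gf_one[OF ab] za by simp
    also have "\<bar>fst z \<bullet> i\<bar> \<le> d" using Basis_le_norm[OF i, of "fst z"] nx by (simp add: inner_commute)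
    then have "(1 + 2 * ?n) * frob W z * \<bar>fst z \<bullet> i\<bar> \<le> (1 + 2 * ?n) * frob W z * d"
      using frob_nonneg[of W z] by (intro mult_left_mono) auto
    finally show ?thesis by (simp add: mult_ac)
  qed
  have eqs: "(\<Sum>i\<in>Basis. curv_integrand W (?\<phi> i) i z)
      = (\<Sum>i\<in>Basis. Dpart (?\<phi> i) i z) + (\<Sum>i\<in>Basis. curv_integrand W (?\<phi> i) i z - Dpart (?\<phi> i) i z)"
    by (simp add: sum_subtractf)
  have lb: "(\<Sum>i\<in>Basis. curv_integrand W (?\<phi> i) i z - Dpart (?\<phi> i) i z)
      \<ge> - (\<Sum>i\<in>(Basis::'a set). (1 + 2 * ?n) * d * frob W z)"
  proof -
    have "(\<Sum>i\<in>(Basis::'a set). - ((1 + 2 * ?n) * d * frob W z)) \<le> (\<Sum>i\<in>Basis. curv_integrand W (?\<phi> i) i z - Dpart (?\<phi> i) i z)"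
    proof (rule sum_mono)
      fix i :: 'a assume "i \<in> Basis"
      from err[OF this] show "- ((1 + 2 * ?n) * d * frob W z) \<le> curv_integrand W (?\<phi> i) i z - Dpart (?\<phi> i) i z"
        by (simp add: abs_le_iff)
    qed
    then show ?thesis by (simp add: sum_negf)
  qed
  have S: "(\<Sum>i\<in>(Basis::'a set). (1 + 2 * ?n) * d * frob W z) = ?n * (1 + 2 * ?n) * d * frob W z"
    by (simp add: mult.assoc)
  show ?thesis using eqs lb tr S by linarith
qed

lemma V_side2:
  fixes W :: "'a \<times> 'a \<Rightarrow> 'a::euclidean_space \<Rightarrow> 'a \<Rightarrow> real" and \<psi> :: "'a \<Rightarrow> 'a \<times> 'a \<Rightarrow> real"
  assumes v: "norm (snd z) = 1"
    and B: "\<And>i. i \<in> Basis \<Longrightarrow> \<bar>\<psi> i z\<bar> + (\<Sum>a\<in>Basis. \<bar>Dv (\<psi> i) a z\<bar>) \<le> B"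
    and B': "\<And>i. i \<in> Basis \<Longrightarrow> (\<Sum>j\<in>Basis. \<bar>Dx (\<psi> i) j z\<bar>) \<le> B"
  shows "\<bar>\<Sum>i\<in>Basis. curv_integrand W (\<psi> i) i z\<bar>
     \<le> real DIM('a) * (2 * B + (1 + 2 * real DIM('a)) * B * frob W z)"
proof -
  let ?n = "real DIM('a)"
  have "\<bar>curv_integrand W (\<psi> i) i z\<bar> \<le> 2 * B + (1 + 2 * ?n) * B * frob W z" if i: "i \<in> Basis" for i
  proof -
    have a: "\<bar>curv_integrand W (\<psi> i) i z - Dpart (\<psi> i) i z\<bar>
        \<le> (1 + 2 * ?n) * frob W z * (\<bar>\<psi> i z\<bar> + (\<Sum>a\<in>Basis. \<bar>Dv (\<psi> i) a z\<bar>))"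
      by (rule curv_split[OF i v])
    have "(1 + 2 * ?n) * frob W z * (\<bar>\<psi> i z\<bar> + (\<Sum>a\<in>Basis. \<bar>Dv (\<psi> i) a z\<bar>)) \<le> (1 + 2 * ?n) * frob W z * B"
      using B[OF i] frob_nonneg[of W z] by (intro mult_left_mono) auto
    moreover have "\<bar>Dpart (\<psi> i) i z\<bar> \<le> 2 * B"
      using Dpart_bound[OF i v, of "\<psi> i"] B'[OF i] by linarith
    ultimately show ?thesis using a by (simp add: mult_ac abs_le_iff)
  qed
  then have "(\<Sum>i\<in>Basis. \<bar>curv_integrand W (\<psi> i) i z\<bar>) \<le> (\<Sum>i\<in>(Basis::'a set). 2 * B + (1 + 2 * ?n) * B * frob W z)"
    by (intro sum_mono)
  then have "(\<Sum>i\<in>Basis. \<bar>curv_integrand W (\<psi> i) i z\<bar>) \<le> ?n * (2 * B + (1 + 2 * ?n) * B * frob W z)"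
    by simp
  then show ?thesis by (rule order_trans[OF sum_abs])
qed


lemma arith1:
  fixes n1 K e E M F G L d :: real
  assumes "n1 > 0" "K > 0" "e > 0" "K * e = n1 / 2" "n1 * M - K * F \<le> d * G" "F \<le> e * M + E * L"
    "G \<ge> 0" "L \<ge> 0" "E \<ge> 0" "d \<ge> 0"
  shows "M \<le> max (2 * K * E / n1) (2 * d / n1) * (G + L)"
proof -
  have "K * F \<le> K * (e * M + E * L)" using assms by (intro mult_left_mono) auto
  also have "\<dots> = n1 / 2 * M + K * E * L" using assms(4) by (simp add: algebra_simps)
  finally have "n1 / 2 * M \<le> d * G + K * E * L" using assms(5) by linarith
  then have "M \<le> (2 * d / n1) * G + (2 * K * E / n1) * L" using assms(1)
    by (simp add: field_simps)
  also have "(2 * d / n1) * G \<le> max (2 * K * E / n1) (2 * d / n1) * G"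
    using assms by (intro mult_right_mono) auto
  also have "(2 * K * E / n1) * L \<le> max (2 * K * E / n1) (2 * d / n1) * L"
    using assms by (intro mult_right_mono) auto
  finally show ?thesis by (simp add: distrib_left)
qed

lemma arith2:
  fixes c G M F L K0 K2 :: real
  assumes "c > 0" "c / 2 * G \<le> K0 * M + K2 * F" "F \<le> M + L" "K0 \<ge> 0" "K2 \<ge> 0" "M \<ge> 0" "L \<ge> 0"
  shows "G \<le> 2 * (K0 + K2) / c * (M + L)"
proof -
  have "K2 * F \<le> K2 * (M + L)" using assms by (intro mult_left_mono) auto
  then have "c / 2 * G \<le> (K0 + K2) * (M + L)" using assms
    by (smt (verit) distrib_left distrib_right mult_nonneg_nonneg)
  then show ?thesis using assms(1) by (simp add: field_simps)
qed

theorem lemma4p1: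
  fixes \<Omega> :: "'a::euclidean_space set" and \<beta> :: "'a \<Rightarrow> real" and p :: real
  assumes "DIM('a) \<ge> 2"
    and "C2_domain \<Omega>" and "bounded \<Omega>"
    and "C1_on_surface (frontier \<Omega>) \<beta>" and "\<forall>x\<in>frontier \<Omega>. 0 < \<beta> x \<and> \<beta> x < pi"
    and "p \<ge> 1"
  shows "\<exists>C::real. \<forall>(V :: ('a \<times> 'a) measure) (\<Gamma> :: ('a \<times> 'a) measure) W.
     oriented_integral_varifold (DIM('a) - 1) V \<and> msupport (weight V) \<subseteq> closure \<Omega> \<and>
     C2_rectifiable_measure (DIM('a) - 1) (weight V) \<and>
     radon \<Gamma> \<and> emeasure \<Gamma> (- capillary_bundle \<Omega> \<beta>) = 0 \<and>
     (AE x in weight V. x \<notin> msupport (weight \<Gamma>)) \<and>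
     curvature_in_Lp p V W \<and> has_capillary_curvature \<Omega> \<beta> V \<Gamma> W
     \<longrightarrow> emeasure (weight V) (closure \<Omega>)
            \<le> ennreal C * (emeasure (weight \<Gamma>) (frontier \<Omega>) + ennreal (Lp_norm_pow p V W))
       \<and> emeasure (weight \<Gamma>) (frontier \<Omega>)
            \<le> ennreal C * (emeasure (weight V) (closure \<Omega>) + ennreal (Lp_norm_pow p V W))"
proof -
  note dim = assms(1) and dom = assms(2) and bdd = assms(3) and bC1 = assms(4) and bpos = assms(5)
    and p = assms(6)
  let ?n = "real DIM('a)"
  have n2: "?n \<ge> 2" using dim by simp
  let ?B = "capillary_bundle \<Omega> \<beta>"
  let ?S = "frontier \<Omega>"
  let ?\<nu> = "inward_normal \<Omega>"
  obtain d0 where d0: "\<forall>x\<in>closure \<Omega>. norm x \<le> d0"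
    using bounded_closure[OF bdd] by (auto simp: bounded_iff)
  define d where "d = max d0 1"
  have d1: "d \<ge> 1" and dn: "\<And>x. x \<in> closure \<Omega> \<Longrightarrow> norm x \<le> d"
    using d0 by (auto simp: d_def intro: order_trans[OF _ max.cobounded1])
  define a where "a = d^2 + 2"
  define b where "b = d^2 + 3"
  have ab: "a < b" by (simp add: a_def b_def)
  define Kc where "Kc = closure \<Omega> \<times> sphere (0::'a) 1"
  have Kc_a: "z \<bullet> z < a" if "z \<in> Kc" for z
  proof -
    obtain x v where z: "z = (x, v)" by (cases z)
    have "norm x \<le> d" "norm v = 1" using that z dn by (auto simp: Kc_def)
    then have "x \<bullet> x \<le> d^2" "v \<bullet> v = 1"
      by (auto simp: power2_norm_eq_inner[symmetric] power_mono)
    then show ?thesis using z by (simp add: a_def inner_Pair)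
  qed
  have Kc_v: "norm (snd z) = 1" "norm (fst z) \<le> d" if "z \<in> Kc" for z
    using that dn by (auto simp: Kc_def)
  have Kc_compact: "compact Kc"
    unfolding Kc_def by (intro compact_Times compact_sphere) (simp add: bdd compact_closure)
  have Kc_closed: "closed Kc" using Kc_compact by (rule compact_imp_closed)
  have S_sub: "?S \<subseteq> closure \<Omega>" by (simp add: frontier_def)
  have B_sub: "?B \<subseteq> Kc" using S_sub by (auto simp: capillary_bundle_def capillary_fibre_def Kc_def)
  have Sc: "compact ?S" by (rule compact_frontier_bounded[OF bdd])
  have bc: "continuous_on ?S \<beta>" by (rule beta_cont[OF bC1])
  have B_closed: "closed ?B" by (rule bundle_closed[OF dom bc])
  have cm: "conormal \<Omega> \<beta> \<in> borel_measurable borel" by (rule conormal_measurable[OF dom bpos bc])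
  obtain c where c: "c > 0" "\<forall>x\<in>?S. sin (\<beta> x) \<ge> c"
    using sin_beta_lb[OF Sc bc bpos] by blast
  have nuc: "continuous_on ?S ?\<nu>" by (rule inward_normal_cont(1)[OF dom])
  obtain X :: "'a \<Rightarrow> 'a" where X: "polynomial_function X" "\<forall>x\<in>?S. norm (?\<nu> x - X x) < c / 2"
    using Stone_Weierstrass_polynomial_function[OF Sc nuc, of "c / 2"] c(1) by auto
  define \<phi>1 where "\<phi>1 = (\<lambda>(i::'a) (z::'a \<times> 'a). (fst z \<bullet> i) * Gf a b (z \<bullet> z))"
  define \<phi>2 where "\<phi>2 = (\<lambda>(i::'a) (z::'a \<times> 'a). (X (fst z) \<bullet> i) * Gf a b (z \<bullet> z))"
  have C1: "C1c (\<phi>1 i)" for i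
  proof -
    have "bounded_linear (\<lambda>z::'a \<times> 'a. fst z \<bullet> i)"
      by (intro bounded_linear_compose[OF bounded_linear_inner_left bounded_linear_fst])
    then show ?thesis unfolding \<phi>1_def by (intro C1c_cut C1_on_linear ab)
  qed
  have C2: "C1c (\<phi>2 i)" if i: "i \<in> Basis" for i
  proof -
    have "polynomial_function (\<lambda>z::'a \<times> 'a. X (fst z))"
      using polynomial_function_compose[OF polynomial_function_bounded_linear[OF bounded_linear_fst] X(1)]
      by (simp add: o_def)
    then have "real_polynomial_function (\<lambda>z::'a \<times> 'a. X (fst z) \<bullet> i)"
      using i by (simp add: polynomial_function_iff_Basis_inner)
    then show ?thesis unfolding \<phi>2_def by (intro C1c_cut C1_on_poly ab)
  qed
  define \<Phi> where "\<Phi> = (\<lambda>z. \<Sum>i\<in>(Basis::'a set). \<bar>\<phi>2 i z\<bar> + (\<Sum>j\<in>Basis. \<bar>Dx (\<phi>2 i) j z\<bar>) + (\<Sum>a\<in>Basis. \<bar>Dv (\<phi>2 i) a z\<bar>))"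
  have \<Phi>c: "continuous_on UNIV \<Phi>"
    unfolding \<Phi>_def using C1c_cont[OF C2] by (intro continuous_intros) auto
  obtain B2 where B2: "B2 \<ge> 0" "\<forall>z\<in>Kc. \<Phi> z \<le> B2"
  proof -
    have "bounded (\<Phi> ` Kc)"
      using Kc_compact \<Phi>c by (meson compact_continuous_image compact_imp_bounded continuous_on_subset subset_UNIV)
    then obtain B where "\<forall>y\<in>\<Phi> ` Kc. norm y \<le> B" by (auto simp: bounded_iff)
    then have "\<forall>z\<in>Kc. \<Phi> z \<le> max B 0" by force
    then show ?thesis using that[of "max B 0"] by auto
  qed
  have B2i: "\<bar>\<phi>2 i z\<bar> + (\<Sum>a\<in>Basis. \<bar>Dv (\<phi>2 i) a z\<bar>) \<le> B2 \<and> (\<Sum>j\<in>Basis. \<bar>Dx (\<phi>2 i) j z\<bar>) \<le> B2"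
    if i: "i \<in> Basis" and z: "z \<in> Kc" for i z
  proof -
    let ?t = "\<lambda>i. \<bar>\<phi>2 i z\<bar> + (\<Sum>j\<in>Basis. \<bar>Dx (\<phi>2 i) j z\<bar>) + (\<Sum>a\<in>Basis. \<bar>Dv (\<phi>2 i) a z\<bar>)"
    have "?t i \<le> (\<Sum>i\<in>Basis. ?t i)"
      using i by (intro member_le_sum) (auto intro!: add_nonneg_nonneg sum_nonneg)
    also have "\<dots> \<le> B2" using B2(2) z by (simp add: \<Phi>_def)
    finally have "?t i \<le> B2" .
    moreover have "0 \<le> (\<Sum>j\<in>Basis. \<bar>Dx (\<phi>2 i) j z\<bar>)" "0 \<le> (\<Sum>a\<in>Basis. \<bar>Dv (\<phi>2 i) a z\<bar>)" "0 \<le> \<bar>\<phi>2 i z\<bar>"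
      by (auto intro: sum_nonneg)
    ultimately show ?thesis by linarith
  qed
  define K1 where "K1 = ?n * (1 + 2 * ?n) * d"
  have K1: "K1 > 0" using n2 d1 by (simp add: K1_def)
  define e where "e = (?n - 1) / (2 * K1)"
  have e: "e > 0" using n2 K1 by (simp add: e_def)
  define C1 where "C1 = max (2 * K1 * e powr (1 - p) / (?n - 1)) (2 * d / (?n - 1))"
  define K0 where "K0 = ?n * 2 * B2"
  define K2 where "K2 = ?n * (1 + 2 * ?n) * B2"
  define C2 where "C2 = 2 * (K0 + K2) / c"
  define C where "C = max C1 C2"
  show ?thesis
  proof (intro exI[of _ C] allI impI)
    fix V \<Gamma> :: "('a \<times> 'a) measure" and W
    assume H: "oriented_integral_varifold (DIM('a) - 1) V \<and> msupport (weight V) \<subseteq> closure \<Omega> \<and>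
     C2_rectifiable_measure (DIM('a) - 1) (weight V) \<and>
     radon \<Gamma> \<and> emeasure \<Gamma> (- capillary_bundle \<Omega> \<beta>) = 0 \<and>
     (AE x in weight V. x \<notin> msupport (weight \<Gamma>)) \<and>
     curvature_in_Lp p V W \<and> has_capillary_curvature \<Omega> \<beta> V \<Gamma> W"
    show "emeasure (weight V) (closure \<Omega>)
            \<le> ennreal C * (emeasure (weight \<Gamma>) (frontier \<Omega>) + ennreal (Lp_norm_pow p V W))
       \<and> emeasure (weight \<Gamma>) (frontier \<Omega>)
            \<le> ennreal C * (emeasure (weight V) (closure \<Omega>) + ennreal (Lp_norm_pow p V W))"
    proof -
    have OV: "oriented_integral_varifold (DIM('a) - 1) V" and supp: "msupport (weight V) \<subseteq> closure \<Omega>"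
      and rG: "radon \<Gamma>" and nG: "emeasure \<Gamma> (- ?B) = 0" and Lp: "curvature_in_Lp p V W"
      and curv: "has_capillary_curvature \<Omega> \<beta> V \<Gamma> W" using H by auto
    have rV: "radon V" and sph: "emeasure V (- (UNIV \<times> sphere 0 1)) = 0"
      using OV unfolding oriented_integral_varifold_def by auto
    have sV: "sets V = sets borel" using rV by (simp add: radon_def)
    have sG: "sets \<Gamma> = sets borel" using rG by (simp add: radon_def)
    have spV: "space V = UNIV" using sets_eq_imp_space_eq[OF sV] by simp
    have spG: "space \<Gamma> = UNIV" using sets_eq_imp_space_eq[OF sG] by simp
    have swV: "sets (weight V) = sets borel" by (simp add: weight_def)
    have "- msupport (weight V) \<in> null_sets (weight V)" by (rule msupport_null[OF swV])
    moreover have "- closure \<Omega> \<in> sets (weight V)" using swV by simp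
    moreover have "- closure \<Omega> \<subseteq> - msupport (weight V)" using supp by auto
    ultimately have "- closure \<Omega> \<in> null_sets (weight V)" by (rule null_sets_subset)
    then have "emeasure (weight V) (- closure \<Omega>) = 0" by auto
    then have n1: "emeasure V (fst -` (- closure \<Omega>)) = 0" using weight_emeasure[OF sV, of "- closure \<Omega>"] by simp
    have m1: "fst -` (- closure \<Omega>) \<in> sets V"
    proof -
      have "fst -` (- closure \<Omega>) = (- closure \<Omega>) \<times> (UNIV :: 'a set)" by auto
      moreover have "open ((- closure \<Omega>) \<times> (UNIV :: 'a set))" by (intro open_Times) auto
      ultimately show ?thesis using sV by (simp add: borel_open)
    qed
    have m2: "- (UNIV \<times> sphere (0::'a) 1) \<in> sets V"
    proof -
      have "closed (UNIV \<times> sphere (0::'a) 1)" by (intro closed_Times) auto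
      then have "open (- (UNIV \<times> sphere (0::'a) 1))" by (rule open_Compl)
      then have "- (UNIV \<times> sphere (0::'a) 1) \<in> sets borel" by (rule borel_open)
      then show ?thesis using sV by simp
    qed
    have "emeasure V (- Kc) \<le> emeasure V (fst -` (- closure \<Omega>) \<union> - (UNIV \<times> sphere 0 1))"
      by (rule emeasure_mono[OF _ sets.Un[OF m1 m2]]) (auto simp: Kc_def)
    also have "\<dots> \<le> emeasure V (fst -` (- closure \<Omega>)) + emeasure V (- (UNIV \<times> sphere 0 1))"
      by (rule emeasure_subadditive[OF m1 m2])
    finally have nK: "emeasure V (- Kc) = 0" using n1 sph by simp
    have Kc_b: "Kc \<in> sets borel" using Kc_closed by (rule borel_closed)
    note aeV = ae_from_null(1)[OF sV Kc_b nK] and eV = ae_from_null(2)[OF sV Kc_b nK]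
    have finV: "emeasure V UNIV < \<infinity>" using rV Kc_compact eV by (simp add: radon_def)
    have wV: "emeasure (weight V) (closure \<Omega>) = emeasure V UNIV"
    proof -
      have "emeasure (weight V) (closure \<Omega>) = emeasure V (fst -` closure \<Omega>)"
        by (rule weight_emeasure[OF sV]) simp
      also have "\<dots> = emeasure V UNIV"
      proof (rule emeasure_eq_AE)
        show "AE z in V. (z \<in> fst -` closure \<Omega>) = (z \<in> UNIV)"
          using aeV by eventually_elim (auto simp: Kc_def)
        have "fst -` closure \<Omega> = closure \<Omega> \<times> (UNIV :: 'a set)" by auto
        moreover have "closed (closure \<Omega> \<times> (UNIV :: 'a set))" by (intro closed_Times) auto
        ultimately show "fst -` closure \<Omega> \<in> sets V" using sV by (simp add: borel_closed)
        show "UNIV \<in> sets V" using sV by simp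
      qed
      finally show ?thesis .
    qed
    have B_b: "?B \<in> sets borel" using B_closed by (rule borel_closed)
    note aeG = ae_from_null(1)[OF sG B_b nG] and eG = ae_from_null(2)[OF sG B_b nG]
    have finG0: "emeasure \<Gamma> UNIV < \<infinity>"
    proof -
      have "emeasure \<Gamma> ?B \<le> emeasure \<Gamma> Kc" by (rule emeasure_mono[OF B_sub]) (use sG Kc_b in simp)
      also have "\<dots> < \<infinity>" using rG Kc_compact by (simp add: radon_def)
      finally show ?thesis using eG by simp
    qed
    have wG: "emeasure (weight \<Gamma>) ?S = emeasure \<Gamma> UNIV"
    proof -
      have "emeasure (weight \<Gamma>) ?S = emeasure \<Gamma> (fst -` ?S)"
        by (rule weight_emeasure[OF sG]) simp
      also have "\<dots> = emeasure \<Gamma> UNIV"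
      proof (rule emeasure_eq_AE)
        show "AE z in \<Gamma>. (z \<in> fst -` ?S) = (z \<in> UNIV)"
          using aeG by eventually_elim (auto simp: capillary_bundle_def)
        have "fst -` ?S = ?S \<times> (UNIV :: 'a set)" by auto
        moreover have "closed (?S \<times> (UNIV :: 'a set))" by (intro closed_Times) auto
        ultimately show "fst -` ?S \<in> sets \<Gamma>" using sG by (simp add: borel_closed)
        show "UNIV \<in> sets \<Gamma>" using sG by simp
      qed
      finally show ?thesis .
    qed
    define M where "M = measure V UNIV"
    define G where "G = measure \<Gamma> UNIV"
    define L where "L = Lp_norm_pow p V W"
    have eM: "emeasure V UNIV = ennreal M" unfolding M_def using finV by (simp add: emeasure_eq_ennreal_measure)
    have eGG: "emeasure \<Gamma> UNIV = ennreal G" unfolding G_def using finG0 by (simp add: emeasure_eq_ennreal_measure)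
    have M0: "M \<ge> 0" "G \<ge> 0" by (simp_all add: M_def G_def)
    let ?V = "completion V"
    have finV': "finite_measure ?V"
      by (rule finite_measureI) (use finV spV sV in simp)
    have mV': "measure ?V (space ?V) = M" using spV sV by (simp add: M_def)
    have aeV': "AE z in ?V. z \<in> Kc" by (rule AE_completion[OF aeV])
    have finG: "finite_measure \<Gamma>" by (rule finite_measureI) (use finG0 spG in simp)
    note FL = frob_Lp[OF finV' Lp p]
    have L0: "L \<ge> 0" unfolding L_def Lp_norm_pow_def by (rule integral_nonneg_AE) simp
    define F where "F = integral\<^sup>L ?V (frob W)"
    have Fe: "F \<le> ee * M + ee powr (1 - p) * L" if "ee > 0" for ee :: real
      using FL(4)[OF that] mV' unfolding F_def L_def by simp

    interpret fV: finite_measure ?V by (rule finV')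
    interpret fG: finite_measure \<Gamma> by (rule finG)
    have S1i: "\<And>i. i \<in> Basis \<Longrightarrow> C1c (\<phi>1 i)" using C1 by blast
    note S1 = sum_identity[where \<psi>=\<phi>1, OF curv S1i finG sG cm]
    note S2 = sum_identity[where \<psi>=\<phi>2, OF curv C2 finG sG cm]
    have mG: "measure \<Gamma> (space \<Gamma>) = G" using spG by (simp add: G_def)
    have onB: "z \<in> Kc" "Gf a b (z \<bullet> z) = 1" if "z \<in> ?B" for z
    proof -
      show zK: "z \<in> Kc" using that B_sub by blast
      show "Gf a b (z \<bullet> z) = 1" using Gf_one[OF ab less_imp_le[OF Kc_a[OF zK]]] .
    qed
    have V1: "(?n - 1) * M - K1 * F \<le> (\<integral>z. (\<Sum>i\<in>Basis. curv_integrand W (\<phi>1 i) i z) \<partial>?V)"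
    proof -
      have ae: "AE z in ?V. (?n - 1) - K1 * frob W z \<le> (\<Sum>i\<in>Basis. curv_integrand W (\<phi>1 i) i z)"
        using aeV'
      proof eventually_elim
        case (elim z)
        show ?case
          using V_side1[OF ab Kc_v(1)[OF elim] Kc_a[OF elim] Kc_v(2)[OF elim], of W]
          unfolding \<phi>1_def K1_def by (simp add: mult_ac)
      qed
      have int: "integrable ?V (\<lambda>z. (?n - 1) - K1 * frob W z)"
        using FL(3) by (intro Bochner_Integration.integrable_diff integrable_mult_right) auto
      have "(\<integral>z. (?n - 1) - K1 * frob W z \<partial>?V) \<le> (\<integral>z. (\<Sum>i\<in>Basis. curv_integrand W (\<phi>1 i) i z) \<partial>?V)"
        by (rule integral_mono_AE[OF int S1(1) ae])
      moreover have "(\<integral>z. (?n - 1) - K1 * frob W z \<partial>?V) = (?n - 1) * M - K1 * F"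
        using FL(3) mV' by (simp add: F_def)
      ultimately show ?thesis by simp
    qed
    have G1: "- (\<integral>z. (\<Sum>i\<in>Basis. \<phi>1 i z * (conormal \<Omega> \<beta> z \<bullet> i)) \<partial>\<Gamma>) \<le> d * G"
    proof -
      have ae: "AE z in \<Gamma>. - (\<Sum>i\<in>Basis. \<phi>1 i z * (conormal \<Omega> \<beta> z \<bullet> i)) \<le> d"
        using aeG
      proof eventually_elim
        case (elim z)
        have "(\<Sum>i\<in>Basis. \<phi>1 i z * (conormal \<Omega> \<beta> z \<bullet> i)) = (\<Sum>i\<in>Basis. (fst z \<bullet> i) * (conormal \<Omega> \<beta> z \<bullet> i))"
          using onB[OF elim] by (simp add: \<phi>1_def)
        also have "\<dots> = fst z \<bullet> conormal \<Omega> \<beta> z" by (rule sum_inner_Basis)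
        finally have eq: "(\<Sum>i\<in>Basis. \<phi>1 i z * (conormal \<Omega> \<beta> z \<bullet> i)) = fst z \<bullet> conormal \<Omega> \<beta> z" .
        have "\<bar>fst z \<bullet> conormal \<Omega> \<beta> z\<bar> \<le> norm (fst z) * norm (conormal \<Omega> \<beta> z)" by (rule Cauchy_Schwarz_ineq2)
        also have "\<dots> \<le> d * 1"
          using Kc_v(2)[OF onB(1)[OF elim]] conormal_norm_le[of \<Omega> \<beta> z] d1 by (intro mult_mono) auto
        finally show ?case using eq by (simp add: abs_le_iff)
      qed
      have "(\<integral>z. - (\<Sum>i\<in>Basis. \<phi>1 i z * (conormal \<Omega> \<beta> z \<bullet> i)) \<partial>\<Gamma>) \<le> (\<integral>z. d \<partial>\<Gamma>)"
        using S1(2) by (intro integral_mono_AE[OF _ _ ae]) auto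
      then show ?thesis using mG by (simp add: mult.commute)
    qed
    have ineq1: "M \<le> C1 * (G + L)"
      unfolding C1_def
    proof (rule arith1)
      show "?n - 1 > 0" using n2 by simp
      show "K1 > 0" by (rule K1)
      show "e > 0" by (rule e)
      show "K1 * e = (?n - 1) / 2" using K1 by (simp add: e_def)
      show "(?n - 1) * M - K1 * F \<le> d * G" using V1 G1 S1(3) by linarith
      show "F \<le> e * M + e powr (1 - p) * L" by (rule Fe[OF e])
      show "G \<ge> 0" "L \<ge> 0" "e powr (1 - p) \<ge> 0" "d \<ge> 0" using M0 L0 d1 by auto
    qed
    have V2: "- (\<integral>z. (\<Sum>i\<in>Basis. curv_integrand W (\<phi>2 i) i z) \<partial>?V) \<le> K0 * M + K2 * F"
    proof -
      have ae: "AE z in ?V. - (\<Sum>i\<in>Basis. curv_integrand W (\<phi>2 i) i z) \<le> K0 + K2 * frob W z"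
        using aeV'
      proof eventually_elim
        case (elim z)
        have "\<bar>\<Sum>i\<in>Basis. curv_integrand W (\<phi>2 i) i z\<bar>
            \<le> ?n * (2 * B2 + (1 + 2 * ?n) * B2 * frob W z)"
          by (rule V_side2[OF Kc_v(1)[OF elim]]) (use B2i elim in auto)
        also have "\<dots> = K0 + K2 * frob W z" by (simp add: K0_def K2_def algebra_simps)
        finally show ?case by (simp add: abs_le_iff)
      qed
      have int: "integrable ?V (\<lambda>z. K0 + K2 * frob W z)"
        using FL(3) by (intro Bochner_Integration.integrable_add integrable_mult_right) auto
      have "(\<integral>z. - (\<Sum>i\<in>Basis. curv_integrand W (\<phi>2 i) i z) \<partial>?V) \<le> (\<integral>z. K0 + K2 * frob W z \<partial>?V)"
        using S2(1) by (intro integral_mono_AE[OF _ int ae]) auto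
      moreover have "(\<integral>z. K0 + K2 * frob W z \<partial>?V) = K0 * M + K2 * F"
        using FL(3) mV' by (simp add: F_def mult.commute)
      ultimately show ?thesis by simp
    qed
    have G2: "c / 2 * G \<le> (\<integral>z. (\<Sum>i\<in>Basis. \<phi>2 i z * (conormal \<Omega> \<beta> z \<bullet> i)) \<partial>\<Gamma>)"
    proof -
      have ae: "AE z in \<Gamma>. c / 2 \<le> (\<Sum>i\<in>Basis. \<phi>2 i z * (conormal \<Omega> \<beta> z \<bullet> i))"
        using aeG
      proof eventually_elim
        case (elim z)
        obtain x v where z: "z = (x, v)" by (cases z)
        let ?m = "conormal \<Omega> \<beta> z"
        have x: "x \<in> ?S" using elim z by (auto simp: capillary_bundle_def)
        have "(\<Sum>i\<in>Basis. \<phi>2 i z * (?m \<bullet> i)) = (\<Sum>i\<in>Basis. (X x \<bullet> i) * (?m \<bullet> i))"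
          using onB[OF elim] z by (simp add: \<phi>2_def)
        also have "\<dots> = X x \<bullet> ?m" by (rule sum_inner_Basis)
        finally have eq: "(\<Sum>i\<in>Basis. \<phi>2 i z * (?m \<bullet> i)) = X x \<bullet> ?m" .
        have m1: "norm ?m = 1" and mn: "?m \<bullet> ?\<nu> x = sin (\<beta> x)"
          using conormal_facts(1,2)[OF dom bpos elim[unfolded z]] z by auto
        have "\<bar>(X x - ?\<nu> x) \<bullet> ?m\<bar> \<le> norm (X x - ?\<nu> x) * norm ?m" by (rule Cauchy_Schwarz_ineq2)
        also have "\<dots> < c / 2" using X(2) x m1 by (simp add: norm_minus_commute)
        finally have "\<bar>(X x - ?\<nu> x) \<bullet> ?m\<bar> < c / 2" .
        moreover have "X x \<bullet> ?m = ?\<nu> x \<bullet> ?m + (X x - ?\<nu> x) \<bullet> ?m" by (simp add: inner_diff_left)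
        moreover have "?\<nu> x \<bullet> ?m \<ge> c" using mn c(2) x by (simp add: inner_commute)
        ultimately show ?case using eq by (simp add: abs_less_iff)
      qed
      have "(\<integral>z. c / 2 \<partial>\<Gamma>) \<le> (\<integral>z. (\<Sum>i\<in>Basis. \<phi>2 i z * (conormal \<Omega> \<beta> z \<bullet> i)) \<partial>\<Gamma>)"
        using S2(2) by (intro integral_mono_AE[OF _ _ ae]) auto
      then show ?thesis using mG by (simp add: mult.commute)
    qed
    have ineq2: "G \<le> C2 * (M + L)"
      unfolding C2_def
    proof (rule arith2)
      show "c > 0" by (rule c(1))
      show "c / 2 * G \<le> K0 * M + K2 * F" using V2 G2 S2(3) by linarith
      show "F \<le> M + L" using Fe[of 1] by simp
      show "K0 \<ge> 0" "K2 \<ge> 0" using B2(1) by (simp_all add: K0_def K2_def)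
      show "M \<ge> 0" "L \<ge> 0" using M0 L0 by auto
    qed
    have C2nn: "C2 \<ge> 0" using B2(1) c(1) by (simp add: C2_def K0_def K2_def)
    have CC: "C \<ge> C1" "C \<ge> C2" "C \<ge> 0" using C2nn by (auto simp: C_def)
    have r1: "M \<le> C * (G + L)"
      using ineq1 mult_right_mono[OF CC(1), of "G + L"] M0 L0 by linarith
    have r2: "G \<le> C * (M + L)"
      using ineq2 mult_right_mono[OF CC(2), of "M + L"] M0 L0 by linarith
    have e1: "ennreal C * (ennreal G + ennreal L) = ennreal (C * (G + L))"
      using CC(3) M0 L0 by (simp add: ennreal_mult)
    have e2: "ennreal C * (ennreal M + ennreal L) = ennreal (C * (M + L))"
      using CC(3) M0 L0 by (simp add: ennreal_mult)
    show ?thesis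
      unfolding wV wG eM eGG L_def[symmetric] e1 e2
      using r1 r2 by (auto intro: ennreal_leI)
    qed
  qed
qed


end
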